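(* Let $T$ be a $k$-tree and $C$ a $k$-clique of $T$. Then $$k+\frac{\log_2 N(T;C)}{2}\le \mu(T;C)\le \frac{N(T;C)+2k-1}{2}.$$ The lower bound holds with equality if and only if $T$ is a $k$-star and $C$ is its base $k$-clique. If $T$ has at least $k+1$ vertices, the upper bound holds with equality if and only if $T$ is a path-type $k$-tree and $C$ is simplicial.
   Context: A $k$-tree is defined recursively: $K_k$ is a $k$-tree, and if $T$ is a $k$-tree then so is the graph obtained by joining a new vertex to all vertices of some $k$-clique of $T$; there are no others. A sub-$k$-tree is a subgraph that is itself a $k$-tree. $N(T;C)$ is the number of sub-$k$-trees containing $C$ and $\mu(T;C)$ is their average number of vertices. A $k$-star is a $k$-tree consisting of a $k$-clique (its base $k$-clique) together with some number $m\ge 0$ of further pairwise non-adjacent vertices each joined to all vertices of the base (for $m=1$, any $k$-clique of $K_{k+1}$ may serve as base). A $k$-leaf is a vertex lying in exactly one $(k+1)$-clique; a simplicial $k$-clique is one containing a $k$-leaf. A path-type $k$-tree is a $k$-tree that is $K_k$, $K_{k+1}$, or has exactly two $k$-leaves. *)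

theory Defs
  imports Complex_Main
begin

text \<open>Simple graphs are given by a vertex set V and an edge set E of 2-element vertex sets.\<close>

definition isClique :: "'a set set \<Rightarrow> 'a set \<Rightarrow> bool" where
  "isClique E S \<longleftrightarrow> (\<forall>x\<in>S. \<forall>y\<in>S. x \<noteq> y \<longrightarrow> {x, y} \<in> E)"

definition completeEdges :: "'a set \<Rightarrow> 'a set set" where
  "completeEdges V = {e. \<exists>x y. x \<in> V \<and> y \<in> V \<and> x \<noteq> y \<and> e = {x, y}}"

inductive kTree :: "nat \<Rightarrow> 'a set \<Rightarrow> 'a set set \<Rightarrow> bool" for k :: nat where
  base: "finite V \<Longrightarrow> card V = k \<Longrightarrow> kTree k V (completeEdges V)"
| step: "kTree k V E \<Longrightarrow> C \<subseteq> V \<Longrightarrow> card C = k \<Longrightarrow> isClique E C \<Longrightarrow> v \<notin> V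
          \<Longrightarrow> kTree k (insert v V) (E \<union> {{v, c} | c. c \<in> C})"

definition kClique :: "nat \<Rightarrow> 'a set \<Rightarrow> 'a set set \<Rightarrow> 'a set \<Rightarrow> bool" where
  "kClique k V E C \<longleftrightarrow> C \<subseteq> V \<and> finite C \<and> card C = k \<and> isClique E C"

definition subKTrees :: "nat \<Rightarrow> 'a set \<Rightarrow> 'a set set \<Rightarrow> 'a set \<Rightarrow> ('a set \<times> 'a set set) set" where
  "subKTrees k V E C = {(V', E'). V' \<subseteq> V \<and> E' \<subseteq> E \<and> kTree k V' E' \<and> C \<subseteq> V'}"

definition Ncount :: "nat \<Rightarrow> 'a set \<Rightarrow> 'a set set \<Rightarrow> 'a set \<Rightarrow> nat" where
  "Ncount k V E C = card (subKTrees k V E C)"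

definition mu :: "nat \<Rightarrow> 'a set \<Rightarrow> 'a set set \<Rightarrow> 'a set \<Rightarrow> real" where
  "mu k V E C = (\<Sum>S\<in>subKTrees k V E C. real (card (fst S))) / real (Ncount k V E C)"

definition kStarBase :: "nat \<Rightarrow> 'a set \<Rightarrow> 'a set set \<Rightarrow> 'a set \<Rightarrow> bool" where
  "kStarBase k V E B \<longleftrightarrow> kTree k V E \<and> kClique k V E B
     \<and> (\<forall>x\<in>V - B. \<forall>y\<in>B. {x, y} \<in> E)
     \<and> (\<forall>x\<in>V - B. \<forall>y\<in>V - B. x \<noteq> y \<longrightarrow> {x, y} \<notin> E)"

definition kLeaf :: "nat \<Rightarrow> 'a set \<Rightarrow> 'a set set \<Rightarrow> 'a \<Rightarrow> bool" where
  "kLeaf k V E v \<longleftrightarrow> v \<in> V \<and> card {S. kClique (k + 1) V E S \<and> v \<in> S} = 1"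

definition simplicial :: "nat \<Rightarrow> 'a set \<Rightarrow> 'a set set \<Rightarrow> 'a set \<Rightarrow> bool" where
  "simplicial k V E C \<longleftrightarrow> kClique k V E C \<and> (\<exists>v\<in>C. kLeaf k V E v)"

definition pathType :: "nat \<Rightarrow> 'a set \<Rightarrow> 'a set set \<Rightarrow> bool" where
  "pathType k V E \<longleftrightarrow> kTree k V E \<and>
     (card V = k \<or> card V = k + 1 \<or> card {v. kLeaf k V E v} = 2)"

end

theory Submission
  imports Defs
begin

abbreviation cmp where "cmp \<equiv> completeEdges"

definition nb :: "'a set set \<Rightarrow> 'a \<Rightarrow> 'a set" where "nb E x = {y. {x,y} \<in> E}"

lemma cmp_pair[simp]: "{x,y} \<in> cmp V \<longleftrightarrow> x \<in> V \<and> y \<in> V \<and> x \<noteq> y"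
  unfolding completeEdges_def by (auto simp: doubleton_eq_iff)

lemma cmp_mem: "e \<in> cmp V \<longleftrightarrow> (\<exists>x y. x \<in> V \<and> y \<in> V \<and> x \<noteq> y \<and> e = {x,y})"
  unfolding completeEdges_def by auto

lemma cmp_mono: "A \<subseteq> B \<Longrightarrow> cmp A \<subseteq> cmp B"
  unfolding completeEdges_def by blast

lemma cmp_Int: "cmp A \<inter> cmp B = cmp (A \<inter> B)"
  unfolding completeEdges_def by (auto simp: doubleton_eq_iff)

lemma isClique_cmp: "isClique E D \<Longrightarrow> cmp D \<subseteq> E"
  unfolding completeEdges_def isClique_def by auto

lemma isClique_cmp_iff: "isClique E D \<longleftrightarrow> cmp D \<subseteq> E"
  unfolding completeEdges_def isClique_def by auto

lemma cmp_insert: "x \<notin> A \<Longrightarrow> cmp (insert x A) = cmp A \<union> {{x,a} | a. a \<in> A}"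
  unfolding completeEdges_def by auto

lemma cmp_card: "finite U \<Longrightarrow> card (cmp U) = card U choose 2"
proof -
  assume f: "finite U"
  have "cmp U = {B. B \<subseteq> U \<and> card B = 2}"
    unfolding completeEdges_def by (auto simp: card_2_iff)
  thus ?thesis using n_subsets[OF f, of 2] by simp
qed

lemma kTree_basic: "kTree k V E \<Longrightarrow> finite V \<and> k \<le> card V \<and> E \<subseteq> cmp V"
proof (induction rule: kTree.induct)
  case (base V)
  then show ?case by auto
next
  case (step V E C v)
  have "{{v, c} |c. c \<in> C} \<subseteq> cmp (insert v V)" using step by auto
  moreover have "cmp V \<subseteq> cmp (insert v V)" by (rule cmp_mono) auto
  ultimately show ?case using step by auto
qed

lemma edge_not_in: "kTree k V E \<Longrightarrow> v \<notin> V \<Longrightarrow> e \<in> E \<Longrightarrow> v \<notin> e"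
  using kTree_basic[of k V E] unfolding completeEdges_def by auto

lemma nb_new: "kTree k V E \<Longrightarrow> v \<notin> V \<Longrightarrow> C \<subseteq> V \<Longrightarrow> nb (E \<union> {{v, c} |c. c \<in> C}) v = C"
  unfolding nb_def using edge_not_in[of k V E v] by (auto simp: doubleton_eq_iff)

lemma nb_old: "kTree k V E \<Longrightarrow> v \<notin> V \<Longrightarrow> C \<subseteq> V \<Longrightarrow> x \<in> V \<Longrightarrow>
   nb (E \<union> {{v, c} |c. c \<in> C}) x = nb E x \<union> (if x \<in> C then {v} else {})"
  unfolding nb_def using edge_not_in[of k V E v] by (auto simp: doubleton_eq_iff)

lemma nb_sub: "kTree k V E \<Longrightarrow> nb E x \<subseteq> V"
  using kTree_basic[of k V E] unfolding nb_def by auto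

lemma single_not_cmp[simp]: "{x} \<notin> cmp V"
  unfolding completeEdges_def by (auto simp: doubleton_eq_iff)

lemma nb_irr: "kTree k V E \<Longrightarrow> x \<notin> nb E x"
  using kTree_basic[of k V E] unfolding nb_def by auto

definition g :: "nat \<Rightarrow> nat \<Rightarrow> nat" where "g k n = (\<Sum>i<n. min i k)"

lemma g_Suc: "g k (Suc n) = g k n + min n k" unfolding g_def by simp

lemma sum_lt_choose: "(\<Sum>i<n. i) = n choose 2"
proof (induction n)
  case 0 then show ?case by simp
next
  case (Suc n)
  have "(Suc n choose 2) = (n choose 1) + (n choose 2)"
    using binomial_Suc_Suc[of n 1] by (simp add: numeral_2_eq_2)
  then show ?case using Suc by simp
qed

lemma g_small: "n \<le> k \<Longrightarrow> g k n = n choose 2"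
proof -
  assume "n \<le> k"
  hence "g k n = (\<Sum>i<n. i)" unfolding g_def by (intro sum.cong) auto
  thus ?thesis using sum_lt_choose by simp
qed

lemma kTree_card_k: "kTree k V E \<Longrightarrow> card V = k \<Longrightarrow> E = cmp V"
proof -
  assume a: "kTree k V E" "card V = k"
  from a(1) show ?thesis
  proof cases
  case (step V0 E0 C v)
  have "finite V0" "k \<le> card V0" using kTree_basic[OF step(3)] by auto
  then have "card V = Suc (card V0)" using step by simp
  then show ?thesis using a \<open>k \<le> card V0\<close> by simp
qed auto
qed

lemma new_inj_card: "v \<notin> C \<Longrightarrow> finite C \<Longrightarrow> card {{v, c} |c. c \<in> C} = card C"
proof -
  assume a: "v \<notin> C" "finite C"
  have "{{v, c} |c. c \<in> C} = (\<lambda>c. {v,c}) ` C" by auto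
  moreover have "inj_on (\<lambda>c. {v,c}) C" using a unfolding inj_on_def by (auto simp: doubleton_eq_iff)
  ultimately show ?thesis by (simp add: card_image)
qed

lemma finite_cmp: "finite V \<Longrightarrow> finite (cmp V)"
proof -
  assume "finite V"
  moreover have "cmp V \<subseteq> Pow V" unfolding completeEdges_def by auto
  ultimately show ?thesis using finite_subset by blast
qed

lemma kTree_finE: "kTree k V E \<Longrightarrow> finite E"
  using kTree_basic[of k V E] finite_cmp finite_subset by blast

lemma edge_count: "kTree k V E \<Longrightarrow> card E = g k (card V)"
proof (induction rule: kTree.induct)
  case (base V)
  then show ?case using cmp_card[of V] g_small[of k k] by simp
next
  case (step V E C v)
  have b: "finite V" "k \<le> card V" "E \<subseteq> cmp V" using kTree_basic[OF step(1)] by auto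
  have fc: "finite C" using b step finite_subset by blast
  have vC: "v \<notin> C" using step by auto
  have disj: "E \<inter> {{v, c} |c. c \<in> C} = {}" using edge_not_in[OF step(1) step(5)] by auto
  have "card (E \<union> {{v, c} |c. c \<in> C}) = card E + card {{v, c} |c. c \<in> C}"
    using card_Un_disjoint[OF kTree_finE[OF step(1)] _ disj] fc by auto
  also have "\<dots> = g k (card V) + k" using new_inj_card[OF vC fc] step by simp
  also have "\<dots> = g k (card (insert v V))" using g_Suc b step by simp
  finally show ?case .
qed

lemma induced_bound: "kTree k V E \<Longrightarrow> U \<subseteq> V \<Longrightarrow> card (E \<inter> cmp U) \<le> g k (card U)"
proof (induction arbitrary: U rule: kTree.induct)
  case (base V)
  have fU: "finite U" using base finite_subset by blast
  have "cmp V \<inter> cmp U = cmp U" using cmp_Int[of V U] base by (simp add: Int_absorb1)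
  moreover have "card U \<le> k" using base card_mono by blast
  ultimately show ?case using cmp_card[OF fU] g_small by simp
next
  case (step V E C v)
  have b: "finite V" "k \<le> card V" "E \<subseteq> cmp V" using kTree_basic[OF step(1)] by auto
  have ev: "\<And>e. e \<in> E \<Longrightarrow> v \<notin> e" using edge_not_in[OF step(1) step(5)] by auto
  show ?case
  proof (cases "v \<in> U")
    case False
    then have "U \<subseteq> V" using step by auto
    have "(E \<union> {{v, c} |c. c \<in> C}) \<inter> cmp U = E \<inter> cmp U"
      using False unfolding completeEdges_def by (auto simp: doubleton_eq_iff)
    then show ?thesis using step.IH[OF \<open>U \<subseteq> V\<close>] by simp
  next
    case True
    define U0 where "U0 = U - {v}"
    have U0V: "U0 \<subseteq> V" using step U0_def by auto
    have fU0: "finite U0" using U0V b finite_subset by blast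
    have cU: "card U = Suc (card U0)" using True fU0 U0_def
      by (metis card_Suc_Diff1 finite_Diff2 finite_insert insert_Diff)
    have sub: "(E \<union> {{v, c} |c. c \<in> C}) \<inter> cmp U \<subseteq> (E \<inter> cmp U0) \<union> (\<lambda>c. {v,c}) ` (C \<inter> U0)"
    proof
      fix e assume e: "e \<in> (E \<union> {{v, c} |c. c \<in> C}) \<inter> cmp U"
      then obtain x y where xy: "x \<in> U" "y \<in> U" "x \<noteq> y" "e = {x,y}" unfolding completeEdges_def by auto
      show "e \<in> (E \<inter> cmp U0) \<union> (\<lambda>c. {v,c}) ` (C \<inter> U0)"
      proof (cases "e \<in> E")
        case True
        then have "v \<noteq> x" "v \<noteq> y" using ev xy by auto
        then show ?thesis using True xy U0_def by auto
      next
        case False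
        then obtain c where c: "c \<in> C" "e = {v,c}" using e by auto
        then have "c \<in> U" "c \<noteq> v" using xy step(2) step(5) by (auto simp: doubleton_eq_iff)
        then show ?thesis using c U0_def by auto
      qed
    qed
    have fin: "finite ((E \<inter> cmp U0) \<union> (\<lambda>c. {v,c}) ` (C \<inter> U0))"
      using kTree_finE[OF step(1)] fU0 by auto
    have "card ((E \<union> {{v, c} |c. c \<in> C}) \<inter> cmp U) \<le> card ((E \<inter> cmp U0) \<union> (\<lambda>c. {v,c}) ` (C \<inter> U0))"
      by (rule card_mono[OF fin sub])
    also have "\<dots> \<le> card (E \<inter> cmp U0) + card ((\<lambda>c. {v,c}) ` (C \<inter> U0))" by (rule card_Un_le)
    also have "\<dots> \<le> g k (card U0) + card (C \<inter> U0)"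
      using step.IH[OF U0V] card_image_le[of "C \<inter> U0" "\<lambda>c. {v,c}"] fU0 by simp
    also have "card (C \<inter> U0) \<le> min (card U0) k"
      using card_mono[of U0 "C \<inter> U0"] card_mono[of C "C \<inter> U0"] fU0 step(3) b step(2)
      by (metis finite_subset inf_le1 inf_le2 min.bounded_iff)
    finally show ?thesis using cU g_Suc by simp
  qed
qed

lemma induced: "kTree k V E \<Longrightarrow> kTree k V' E' \<Longrightarrow> V' \<subseteq> V \<Longrightarrow> E' \<subseteq> E \<Longrightarrow> E' = E \<inter> cmp V'"
proof -
  assume a: "kTree k V E" "kTree k V' E'" "V' \<subseteq> V" "E' \<subseteq> E"
  have s: "E' \<subseteq> E \<inter> cmp V'" using a kTree_basic[OF a(2)] by auto
  have "card (E \<inter> cmp V') \<le> card E'" using induced_bound[OF a(1) a(3)] edge_count[OF a(2)] by simp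
  moreover have "finite (E \<inter> cmp V')" using kTree_finE[OF a(1)] by auto
  ultimately show ?thesis using s card_seteq by blast
qed

lemma min_degree: "kTree k V E \<Longrightarrow> Suc k \<le> card V \<Longrightarrow> x \<in> V \<Longrightarrow> k \<le> card (nb E x)"
proof (induction arbitrary: x rule: kTree.induct)
  case (base V) then show ?case by simp
next
  case (step V E C v)
  have b: "finite V" "k \<le> card V" "E \<subseteq> cmp V" using kTree_basic[OF step(1)] by auto
  have nbv: "nb (E \<union> {{v, c} |c. c \<in> C}) v = C" using nb_new[OF step(1) step(5) step(2)] .
  show ?case
  proof (cases "x = v")
    case True then show ?thesis using nbv step by simp
  next
    case False
    then have xV: "x \<in> V" using step by auto
    have nbx: "nb (E \<union> {{v, c} |c. c \<in> C}) x = nb E x \<union> (if x \<in> C then {v} else {})"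
      using nb_old[OF step(1) step(5) step(2) xV] .
    have fnb: "finite (nb E x)" using nb_sub[OF step(1)] b finite_subset by blast
    show ?thesis
    proof (cases "card V = k")
      case True
      have E: "E = cmp V" using kTree_card_k[OF step(1) True] .
      have CV: "C = V" using step True b card_subset_eq by metis
      have "nb E x = V - {x}" using xV unfolding E nb_def by auto
      then have "nb (E \<union> {{v, c} |c. c \<in> C}) x = insert v (V - {x})" using nbx CV xV by auto
      moreover have "card (insert v (V - {x})) = k" using b True xV step(5)
        by (simp add: card_Diff_singleton) (metis One_nat_def Suc_pred card_gt_0_iff empty_iff)
      ultimately show ?thesis by simp
    next
      case False
      then have "Suc k \<le> card V" using b by simp
      then have "k \<le> card (nb E x)" using step.IH xV by blast
      moreover have "card (nb E x) \<le> card (nb (E \<union> {{v, c} |c. c \<in> C}) x)"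
        using nbx fnb by (intro card_mono) auto
      ultimately show ?thesis by simp
    qed
  qed
qed

lemma removal: "kTree k V E \<Longrightarrow> Suc k \<le> card V \<Longrightarrow> w \<in> V \<Longrightarrow> card (nb E w) = k
   \<Longrightarrow> kTree k (V - {w}) {e\<in>E. w \<notin> e}"
proof (induction arbitrary: w rule: kTree.induct)
  case (base V) then show ?case by simp
next
  case (step V E C v)
  have b: "finite V" "k \<le> card V" "E \<subseteq> cmp V" using kTree_basic[OF step(1)] by auto
  have ev: "\<And>e. e \<in> E \<Longrightarrow> v \<notin> e" using edge_not_in[OF step(1) step(5)] by auto
  show ?case
  proof (cases "w = v")
    case True
    have "insert v V - {w} = V" using True step(5) by auto
    moreover have "{e \<in> E \<union> {{v, c} |c. c \<in> C}. w \<notin> e} = E" using True ev by auto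
    ultimately show ?thesis using step(1) by simp
  next
    case False
    then have wV: "w \<in> V" using step by auto
    have nbw: "nb (E \<union> {{v, c} |c. c \<in> C}) w = nb E w \<union> (if w \<in> C then {v} else {})"
      using nb_old[OF step(1) step(5) step(2) wV] .
    have fnb: "finite (nb E w)" using nb_sub[OF step(1)] b finite_subset by blast
    have vnb: "v \<notin> nb E w" using nb_sub[OF step(1)] step(5) by auto
    show ?thesis
    proof (cases "card V = k")
      case True
      have E: "E = cmp V" using kTree_card_k[OF step(1) True] .
      have CV: "C = V" using step True b card_subset_eq by metis
      have eq: "{e \<in> E \<union> {{v, c} |c. c \<in> C}. w \<notin> e} = cmp (insert v (V - {w}))"
      proof -
        have "cmp (insert v (V - {w})) = cmp (V - {w}) \<union> {{v,a} | a. a \<in> V - {w}}"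
          using cmp_insert[of v "V - {w}"] step(5) by auto
        moreover have "{e \<in> cmp V. w \<notin> e} = cmp (V - {w})"
          unfolding completeEdges_def by auto
        moreover have "{e \<in> {{v, c} |c. c \<in> V}. w \<notin> e} = {{v,a} | a. a \<in> V - {w}}"
          using False by auto
        ultimately show ?thesis unfolding E CV by blast
      qed
      have "insert v V - {w} = insert v (V - {w})" using False by auto
      moreover have "card (insert v (V - {w})) = k"
        using b True wV step(5) by (simp add: card_Diff_singleton) (metis One_nat_def Suc_pred card_gt_0_iff empty_iff)
      ultimately show ?thesis using eq kTree.base[of "insert v (V - {w})" k] b by simp
    next
      case False2: False
      then have ck: "Suc k \<le> card V" using b by simp
      have "k \<le> card (nb E w)" using min_degree[OF step(1) ck wV] .
      then have wC: "w \<notin> C" using nbw step.prems(3) fnb vnb by (auto split: if_splits)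
      have cw: "card (nb E w) = k" using nbw step.prems(3) wC by simp
      have IH: "kTree k (V - {w}) {e \<in> E. w \<notin> e}" using step.IH[OF ck wV cw] .
      have cl: "isClique {e \<in> E. w \<notin> e} C" using step(4) wC unfolding isClique_def by auto
      have "kTree k (insert v (V - {w})) ({e \<in> E. w \<notin> e} \<union> {{v, c} |c. c \<in> C})"
        by (rule kTree.step[OF IH _ step(3) cl]) (use step(2) wC step(5) in auto)
      moreover have "insert v V - {w} = insert v (V - {w})" using False by auto
      moreover have "{e \<in> E \<union> {{v, c} |c. c \<in> C}. w \<notin> e} = {e \<in> E. w \<notin> e} \<union> {{v, c} |c. c \<in> C}"
        using wC False by auto
      ultimately show ?thesis by simp
    qed
  qed
qed

inductive rkt :: "nat \<Rightarrow> 'a set \<Rightarrow> 'a set \<Rightarrow> 'a set set \<Rightarrow> bool" for k :: nat and C :: "'a set" where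
  rbase: "finite C \<Longrightarrow> card C = k \<Longrightarrow> rkt k C C (cmp C)"
| rstep: "rkt k C V E \<Longrightarrow> D \<subseteq> V \<Longrightarrow> card D = k \<Longrightarrow> isClique E D \<Longrightarrow> v \<notin> V
          \<Longrightarrow> rkt k C (insert v V) (E \<union> {{v, c} | c. c \<in> D})"

lemma rkt_kTree: "rkt k C V E \<Longrightarrow> kTree k V E \<and> C \<subseteq> V"
  by (induction rule: rkt.induct) (auto intro: kTree.intros)

lemma rkt_glue: "rkt k D V E \<Longrightarrow> rkt k C W0 E0 \<Longrightarrow> W0 \<inter> V = D \<Longrightarrow> isClique E0 D
   \<Longrightarrow> rkt k C (W0 \<union> V) (E0 \<union> E)"
proof (induction arbitrary: rule: rkt.induct)
  case (rbase)
  then have "W0 \<union> D = W0" by auto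
  moreover have "E0 \<union> cmp D = E0" using isClique_cmp[OF rbase(5)] by auto
  ultimately show ?case using rbase by simp
next
  case (rstep V E D' v)
  have DV: "D \<subseteq> V" using rkt_kTree[OF rstep(1)] by simp
  have vW: "v \<notin> W0" using rstep(5) rstep.prems(2) DV by auto
  have "W0 \<inter> V = D" using rstep.prems(2) vW by auto
  then have IH: "rkt k C (W0 \<union> V) (E0 \<union> E)" using rstep by auto
  have "rkt k C (insert v (W0 \<union> V)) ((E0 \<union> E) \<union> {{v, c} |c. c \<in> D'})"
    by (rule rkt.rstep[OF IH]) (use rstep vW in \<open>auto simp: isClique_def\<close>)
  then show ?case by (simp add: Un_assoc)
qed

lemma clique_old: "kTree k V E \<Longrightarrow> v \<notin> V \<Longrightarrow> K \<subseteq> V \<Longrightarrow>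
   isClique (E \<union> {{v, c} |c. c \<in> D}) K \<longleftrightarrow> isClique E K"
  unfolding isClique_def by (auto simp: doubleton_eq_iff)

lemma reroot: "kTree k V E \<Longrightarrow> kClique k V E C \<Longrightarrow> rkt k C V E"
proof (induction arbitrary: C rule: kTree.induct)
  case (base V)
  then have "C = V" unfolding kClique_def by (metis card_subset_eq)
  then show ?case using base rkt.rbase by simp
next
  case (step V E D v)
  have b: "finite V" "k \<le> card V" "E \<subseteq> cmp V" using kTree_basic[OF step(1)] by auto
  have fD: "finite D" using step(2) b finite_subset by blast
  show ?case
  proof (cases "v \<in> C")
    case False
    then have CV: "C \<subseteq> V" using step(7) unfolding kClique_def by auto
    have "isClique E C" using step(7) clique_old[OF step(1) step(5) CV] unfolding kClique_def by auto
    then have "rkt k C V E" using step.IH step(7) CV unfolding kClique_def by auto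
    from rkt.rstep[OF this step(2) step(3) step(4) step(5)] show ?thesis .
  next
    case True
    have fC: "finite C" "card C = k" "isClique (E \<union> {{v, c} |c. c \<in> D}) C" "C \<subseteq> insert v V"
      using step(7) unfolding kClique_def by auto
    have CvD: "C - {v} \<subseteq> D"
    proof
      fix x assume x: "x \<in> C - {v}"
      then have "{v,x} \<in> E \<union> {{v, c} |c. c \<in> D}" using fC(3) True unfolding isClique_def by auto
      then have "x \<in> nb (E \<union> {{v, c} |c. c \<in> D}) v" unfolding nb_def by simp
      then show "x \<in> D" using nb_new[OF step(1) step(5) step(2)] by simp
    qed
    have ccv: "card (C - {v}) + 1 = k" using fC True by (simp add: card_Diff_singleton) (metis Suc_pred card_gt_0_iff empty_iff One_nat_def)
    have "card (D - (C - {v})) = 1" using card_Diff_subset[OF _ CvD] fC step(3) ccv by simp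
    then obtain c where c: "D - (C - {v}) = {c}" using card_1_singletonE by blast
    have cD: "c \<in> D" "c \<notin> C" using c step(2) step(5) by auto
    have Deq: "insert c C = insert v D" using c True cD CvD by auto
    have cVc: "c \<notin> C" using cD by simp
    have r1: "rkt k C (insert c C) (cmp C \<union> {{c, x} |x. x \<in> C})"
      by (rule rkt.rstep[OF rkt.rbase[OF fC(1) fC(2)]]) (use fC cD in \<open>auto simp: isClique_cmp_iff\<close>)
    have E0: "cmp C \<union> {{c, x} |x. x \<in> C} = cmp (insert v D)"
      using cmp_insert[OF cVc] Deq by simp
    have vD: "v \<notin> D" using step by auto
    have E0': "cmp (insert v D) = cmp D \<union> {{v, x} |x. x \<in> D}" using cmp_insert[OF vD] .
    have kD: "kClique k V E D" using step fD unfolding kClique_def by auto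
    have rD: "rkt k D V E" using step.IH[OF kD] .
    have W: "insert c C \<inter> V = D" using Deq step(2) step(5) by auto
    have clq: "isClique (cmp C \<union> {{c, x} |x. x \<in> C}) D" unfolding E0 isClique_cmp_iff
      using cmp_mono[of D "insert v D"] by auto
    have "rkt k C (insert c C \<union> V) ((cmp C \<union> {{c, x} |x. x \<in> C}) \<union> E)"
      by (rule rkt_glue[OF rD r1 W clq])
    moreover have "insert c C \<union> V = insert v V" using Deq step(2) by auto
    moreover have "(cmp C \<union> {{c, x} |x. x \<in> C}) \<union> E = E \<union> {{v, c} |c. c \<in> D}"
      using E0 E0' isClique_cmp[OF step(4)] by auto
    ultimately show ?thesis by simp
  qed
qed

definition Fam :: "nat \<Rightarrow> 'a set \<Rightarrow> 'a set set \<Rightarrow> 'a set \<Rightarrow> 'a set set" where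
  "Fam k V E C = {A. C \<subseteq> A \<and> A \<subseteq> V \<and> kTree k A (E \<inter> cmp A)}"

lemma rkt_C: "rkt k C V E \<Longrightarrow> finite C \<and> card C = k \<and> C \<subseteq> V \<and> kTree k V E"
  by (induction rule: rkt.induct) (auto intro: kTree.intros)

lemma subKTrees_eq: "kTree k V E \<Longrightarrow> subKTrees k V E C = (\<lambda>A. (A, E \<inter> cmp A)) ` Fam k V E C"
proof -
  assume T: "kTree k V E"
  show ?thesis
  proof
    show "subKTrees k V E C \<subseteq> (\<lambda>A. (A, E \<inter> cmp A)) ` Fam k V E C"
    proof
      fix S assume "S \<in> subKTrees k V E C"
      then obtain A E' where S: "S = (A, E')" "A \<subseteq> V" "E' \<subseteq> E" "kTree k A E'" "C \<subseteq> A"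
        unfolding subKTrees_def by auto
      have "E' = E \<inter> cmp A" using induced[OF T S(4) S(2) S(3)] .
      then show "S \<in> (\<lambda>A. (A, E \<inter> cmp A)) ` Fam k V E C" using S unfolding Fam_def by auto
    qed
  next
    show "(\<lambda>A. (A, E \<inter> cmp A)) ` Fam k V E C \<subseteq> subKTrees k V E C"
      unfolding Fam_def subKTrees_def by auto
  qed
qed

lemma Fam_fin: "finite V \<Longrightarrow> finite (Fam k V E C)"
  by (rule finite_subset[of _ "Pow V"]) (auto simp: Fam_def)

lemma Ncount_Fam: "kTree k V E \<Longrightarrow> Ncount k V E C = card (Fam k V E C)"
  unfolding Ncount_def subKTrees_eq by (rule card_image) (auto simp: inj_on_def)

lemma sum_Fam: "kTree k V E \<Longrightarrow> (\<Sum>S\<in>subKTrees k V E C. real (card (fst S))) = (\<Sum>A\<in>Fam k V E C. real (card A))"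
  unfolding subKTrees_eq by (subst sum.reindex) (auto simp: inj_on_def)

lemma Fam_base: "finite C \<Longrightarrow> card C = k \<Longrightarrow> Fam k C (cmp C) C = {C}"
  unfolding Fam_def using kTree.base[of C k] by (auto simp: Int_absorb1 cmp_mono)

lemma V_in_Fam: "kTree k V E \<Longrightarrow> C \<subseteq> V \<Longrightarrow> V \<in> Fam k V E C"
  unfolding Fam_def using kTree_basic[of k V E] by (simp add: Int_absorb2)

lemma Fam_step:
  assumes T: "kTree k V E" and D: "D \<subseteq> V" "card D = k" "isClique E D" and v: "v \<notin> V"
    and C: "C \<subseteq> V" "card C = k"
  shows "Fam k (insert v V) (E \<union> {{v, c} |c. c \<in> D}) C
        = Fam k V E C \<union> insert v ` {A \<in> Fam k V E C. D \<subseteq> A}"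
proof -
  let ?E' = "E \<union> {{v, c} |c. c \<in> D}"
  have b: "finite V" "k \<le> card V" "E \<subseteq> cmp V" using kTree_basic[OF T] by auto
  have ev: "\<And>e. e \<in> E \<Longrightarrow> v \<notin> e" using edge_not_in[OF T v] by auto
  have fD: "finite D" using D b finite_subset by blast
  have old: "\<And>A. v \<notin> A \<Longrightarrow> ?E' \<inter> cmp A = E \<inter> cmp A"
  proof -
    fix A assume "v \<notin> A"
    then have "\<forall>e \<in> cmp A. v \<notin> e" unfolding completeEdges_def by auto
    then show "?E' \<inter> cmp A = E \<inter> cmp A" by blast
  qed
  have new: "\<And>A. A \<subseteq> V \<Longrightarrow> D \<subseteq> A \<Longrightarrow> ?E' \<inter> cmp (insert v A) = (E \<inter> cmp A) \<union> {{v, c} |c. c \<in> D}"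
  proof -
    fix A assume A: "A \<subseteq> V" "D \<subseteq> A"
    have vA: "v \<notin> A" using A v by auto
    let ?X = "{{v,a} | a. a \<in> A}" and ?N = "{{v, c} |c. c \<in> D}"
    have ce: "cmp (insert v A) = cmp A \<union> ?X" using cmp_insert[OF vA] .
    have e1: "E \<inter> ?X = {}" using ev by auto
    have e2: "?N \<inter> cmp A = {}"
    proof -
      have "\<forall>e \<in> cmp A. v \<notin> e" using vA unfolding completeEdges_def by auto
      then show ?thesis by blast
    qed
    have e3: "?N \<inter> ?X = ?N" using A by auto
    have "?E' \<inter> cmp (insert v A) = (E \<inter> cmp A) \<union> (E \<inter> ?X) \<union> (?N \<inter> cmp A) \<union> (?N \<inter> ?X)"
      unfolding ce by blast
    also have "\<dots> = (E \<inter> cmp A) \<union> ?N" unfolding e1 e2 e3 by simp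
    finally
    show "?E' \<inter> cmp (insert v A) = (E \<inter> cmp A) \<union> {{v, c} |c. c \<in> D}" .
  qed
  show ?thesis
  proof
    show "Fam k (insert v V) ?E' C \<subseteq> Fam k V E C \<union> insert v ` {A \<in> Fam k V E C. D \<subseteq> A}"
    proof
      fix A assume A: "A \<in> Fam k (insert v V) ?E' C"
      then have A1: "C \<subseteq> A" "A \<subseteq> insert v V" "kTree k A (?E' \<inter> cmp A)" unfolding Fam_def by auto
      show "A \<in> Fam k V E C \<union> insert v ` {A \<in> Fam k V E C. D \<subseteq> A}"
      proof (cases "v \<in> A")
        case False
        then have "A \<in> Fam k V E C" using A1 old[OF False] unfolding Fam_def by auto
        then show ?thesis by simp
      next
        case True
        let ?H = "?E' \<inter> cmp A"
        have fA: "finite A" using kTree_basic[OF A1(3)] by simp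
        have vC: "v \<notin> C" using C v by auto
        have "card (insert v C) \<le> card A" using A1 True fA by (intro card_mono) auto
        moreover have "card (insert v C) = Suc k" using vC C b finite_subset by (metis card_insert_disjoint)
        ultimately have ck: "Suc k \<le> card A" by simp
        have md: "k \<le> card (nb ?H v)" using min_degree[OF A1(3) ck True] .
        have nbH: "nb ?H v = D \<inter> A"
        proof -
          have "nb ?E' v = D" using nb_new[OF T v D(1)] .
          moreover have "v \<notin> D" using D v by auto
          ultimately show ?thesis using True unfolding nb_def by auto
        qed
        have DA: "D \<subseteq> A"
        proof -
          have "card (D \<inter> A) \<ge> card D" using md nbH D by simp
          then have "D \<inter> A = D" using fD card_seteq[of D "D \<inter> A"] by auto
          then show ?thesis by auto
        qed
        have cnb: "card (nb ?H v) = k" using nbH DA D by (simp add: Int_absorb2)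
        have R: "kTree k (A - {v}) {e \<in> ?H. v \<notin> e}" using removal[OF A1(3) ck True cnb] .
        have cr: "{e \<in> cmp A. v \<notin> e} = cmp (A - {v})" unfolding completeEdges_def by auto
        have "{e \<in> ?H. v \<notin> e} = {e \<in> E \<inter> cmp A. v \<notin> e}" by blast
        also have "\<dots> = E \<inter> cmp (A - {v})" using cr ev by blast
        finally have "{e \<in> ?H. v \<notin> e} = E \<inter> cmp (A - {v})" .
        then have "A - {v} \<in> Fam k V E C" using R A1 vC unfolding Fam_def by auto
        moreover have "D \<subseteq> A - {v}" using DA v D by auto
        moreover have "A = insert v (A - {v})" using True by auto
        ultimately show ?thesis by blast
      qed
    qed
  next
    show "Fam k V E C \<union> insert v ` {A \<in> Fam k V E C. D \<subseteq> A} \<subseteq> Fam k (insert v V) ?E' C"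
    proof
      fix A assume "A \<in> Fam k V E C \<union> insert v ` {A \<in> Fam k V E C. D \<subseteq> A}"
      then show "A \<in> Fam k (insert v V) ?E' C"
      proof
        assume A: "A \<in> Fam k V E C"
        then have "v \<notin> A" using v unfolding Fam_def by auto
        then show ?thesis using A old unfolding Fam_def by auto
      next
        assume "A \<in> insert v ` {A \<in> Fam k V E C. D \<subseteq> A}"
        then obtain A0 where A0: "A = insert v A0" "A0 \<in> Fam k V E C" "D \<subseteq> A0" by auto
        have A0': "C \<subseteq> A0" "A0 \<subseteq> V" "kTree k A0 (E \<inter> cmp A0)" using A0 unfolding Fam_def by auto
        have cl: "isClique (E \<inter> cmp A0) D" using D(3) A0(3) unfolding isClique_def by auto
        have "kTree k (insert v A0) ((E \<inter> cmp A0) \<union> {{v, c} |c. c \<in> D})"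
          by (rule kTree.step[OF A0'(3) A0(3) D(2) cl]) (use A0' v in auto)
        then show ?thesis using new[OF A0'(2) A0(3)] A0 A0' unfolding Fam_def by auto
      qed
    qed
  qed
qed

lemma Fam_step_rkt:
  assumes "rkt k C V E" "D \<subseteq> V" "card D = k" "isClique E D" "v \<notin> V"
  shows "Fam k (insert v V) (E \<union> {{v, c} |c. c \<in> D}) C
        = Fam k V E C \<union> insert v ` {A \<in> Fam k V E C. D \<subseteq> A}"
  using Fam_step[of k V E D v C] rkt_C[OF assms(1)] assms by auto

lemma Fam_sub: "A \<in> Fam k V E C \<Longrightarrow> C \<subseteq> A \<and> A \<subseteq> V"
  unfolding Fam_def by auto

lemma Fam_closed: "rkt k C V E \<Longrightarrow> A \<in> Fam k V E C \<Longrightarrow> B \<in> Fam k V E C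
   \<Longrightarrow> A \<union> B \<in> Fam k V E C \<and> A \<inter> B \<in> Fam k V E C"
proof (induction arbitrary: A B rule: rkt.induct)
  case rbase
  then have "A = C" "B = C" using Fam_base[of C k] by auto
  then show ?case using rbase by simp
next
  case (rstep V E D v)
  let ?F = "Fam k V E C"
  have eq: "Fam k (insert v V) (E \<union> {{v, c} |c. c \<in> D}) C = ?F \<union> insert v ` {A \<in> ?F. D \<subseteq> A}"
    using Fam_step_rkt[OF rstep(1-5)] .
  have nv: "\<And>X. X \<in> ?F \<Longrightarrow> v \<notin> X" using Fam_sub rstep(5) by blast
  let ?G = "?F \<union> insert v ` {A \<in> ?F. D \<subseteq> A}"
  have IH: "\<And>X Y. X \<in> ?F \<Longrightarrow> Y \<in> ?F \<Longrightarrow> X \<union> Y \<in> ?F \<and> X \<inter> Y \<in> ?F"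
    using rstep.IH by blast
  have i1: "\<And>X. X \<in> ?F \<Longrightarrow> X \<in> ?G" by blast
  have i2: "\<And>X. X \<in> ?F \<Longrightarrow> D \<subseteq> X \<Longrightarrow> insert v X \<in> ?G" by blast
  have cA: "A \<in> ?F \<or> (\<exists>A0. A = insert v A0 \<and> A0 \<in> ?F \<and> D \<subseteq> A0)" using rstep.prems(1) eq by blast
  have cB: "B \<in> ?F \<or> (\<exists>B0. B = insert v B0 \<and> B0 \<in> ?F \<and> D \<subseteq> B0)" using rstep.prems(2) eq by blast
  have "A \<union> B \<in> ?G \<and> A \<inter> B \<in> ?G"
  proof (cases "A \<in> ?F")
    case A: True
    show ?thesis
    proof (cases "B \<in> ?F")
      case True then show ?thesis using IH[OF A True] i1 by blast
    next
      case False
      then obtain B0 where B0: "B = insert v B0" "B0 \<in> ?F" "D \<subseteq> B0" using cB by blast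
      have "A \<union> B = insert v (A \<union> B0)" "A \<inter> B = A \<inter> B0" using B0 nv[OF A] by auto
      then show ?thesis using IH[OF A B0(2)] i1 i2 B0(3) by auto
    qed
  next
    case False
    then obtain A0 where A0: "A = insert v A0" "A0 \<in> ?F" "D \<subseteq> A0" using cA by blast
    show ?thesis
    proof (cases "B \<in> ?F")
      case True
      have "A \<union> B = insert v (A0 \<union> B)" "A \<inter> B = A0 \<inter> B" using A0 nv[OF True] by auto
      then show ?thesis using IH[OF A0(2) True] i1 i2 A0(3) by auto
    next
      case False
      then obtain B0 where B0: "B = insert v B0" "B0 \<in> ?F" "D \<subseteq> B0" using cB by blast
      have "A \<union> B = insert v (A0 \<union> B0)" "A \<inter> B = insert v (A0 \<inter> B0)" using A0 B0 by auto
      then show ?thesis using IH[OF A0(2) B0(2)] i2 A0(3) B0(3) by auto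
    qed
  qed
  then show ?case unfolding eq .
qed

definition SS :: "nat \<Rightarrow> 'a set \<Rightarrow> 'a set set \<Rightarrow> 'a set \<Rightarrow> nat" where
  "SS k V E C = (\<Sum>A\<in>Fam k V E C. card A - k)"

lemma step_counts:
  assumes r: "rkt k C V E" and D: "D \<subseteq> V" "card D = k" "isClique E D" and v: "v \<notin> V"
  defines "E' \<equiv> E \<union> {{v, c} |c. c \<in> D}"
  shows "card (Fam k (insert v V) E' C) = card (Fam k V E C) + card {A \<in> Fam k V E C. D \<subseteq> A}"
    and "SS k (insert v V) E' C = SS k V E C + (\<Sum>A\<in>{A \<in> Fam k V E C. D \<subseteq> A}. card A - k + 1)"
proof -
  let ?F = "Fam k V E C" and ?FD = "{A \<in> Fam k V E C. D \<subseteq> A}"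
  have eq: "Fam k (insert v V) E' C = ?F \<union> insert v ` ?FD" unfolding E'_def using Fam_step_rkt[OF r D v] .
  have rc: "finite C" "card C = k" "C \<subseteq> V" "kTree k V E" using rkt_C[OF r] by auto
  have fV: "finite V" using kTree_basic[OF rc(4)] by simp
  have fF: "finite ?F" using Fam_fin[OF fV] .
  have fFD: "finite ?FD" using fF by simp
  have nv: "\<And>X. X \<in> ?F \<Longrightarrow> v \<notin> X" using Fam_sub v by blast
  have disj: "?F \<inter> insert v ` ?FD = {}" using nv by auto
  have inj: "inj_on (insert v) ?FD"
  proof (rule inj_onI)
    fix X Y assume "X \<in> ?FD" "Y \<in> ?FD" "insert v X = insert v Y"
    then have "insert v X - {v} = insert v Y - {v}" by simp
    moreover have "insert v X - {v} = X" "insert v Y - {v} = Y" using nv \<open>X \<in> ?FD\<close> \<open>Y \<in> ?FD\<close> by auto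
    ultimately show "X = Y" by simp
  qed
  show "card (Fam k (insert v V) E' C) = card ?F + card ?FD"
    unfolding eq using card_Un_disjoint[OF fF _ disj] fFD card_image[OF inj] by simp
  have cA: "\<And>X. X \<in> ?FD \<Longrightarrow> card (insert v X) - k = card X - k + 1"
  proof -
    fix X assume X: "X \<in> ?FD"
    have XV: "C \<subseteq> X" "X \<subseteq> V" using X Fam_sub[of X k V E C] by auto
    have "finite X" using finite_subset[OF XV(2) fV] .
    then have "k \<le> card X" using card_mono[OF _ XV(1)] rc(2) by simp
    then show "card (insert v X) - k = card X - k + 1" using nv X \<open>finite X\<close> by simp
  qed
  have "SS k (insert v V) E' C = (\<Sum>A\<in>?F. card A - k) + (\<Sum>A\<in>insert v ` ?FD. card A - k)"
    unfolding SS_def eq by (rule sum.union_disjoint[OF fF _ disj]) (use fFD in simp)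
  also have "(\<Sum>A\<in>insert v ` ?FD. card A - k) = (\<Sum>A\<in>?FD. card (insert v A) - k)"
    by (rule sum.reindex[OF inj, unfolded comp_def])
  also have "\<dots> = (\<Sum>A\<in>?FD. card A - k + 1)" using cA by (rule sum.cong[OF refl])
  finally show "SS k (insert v V) E' C = SS k V E C + (\<Sum>A\<in>?FD. card A - k + 1)" unfolding SS_def .
qed

lemma sq_expand: "1 \<le> (N::nat) \<Longrightarrow> (N+m)*(N+m-1) = N*(N-1) + 2*(m*N) + m*(m-1)"
proof -
  assume "1 \<le> N"
  then obtain a where a: "N = Suc a" by (cases N) auto
  show ?thesis
  proof (cases m)
    case 0 then show ?thesis by simp
  next
    case (Suc b) then show ?thesis unfolding a by (simp add: algebra_simps)
  qed
qed

lemma arith_help: "2*((a::nat)+b) = c + 2*d + e \<Longrightarrow> 2*a \<le> c \<Longrightarrow> b \<le> d \<Longrightarrow> e = 0 \<and> 2*a = c \<and> b = d"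
  by arith

lemma upper_rkt: "rkt k C V E \<Longrightarrow>
   card V - k + 1 \<le> card (Fam k V E C) \<and>
   2 * SS k V E C \<le> card (Fam k V E C) * (card (Fam k V E C) - 1) \<and>
   (2 * SS k V E C = card (Fam k V E C) * (card (Fam k V E C) - 1) \<longleftrightarrow> card (Fam k V E C) = card V - k + 1)"
proof (induction rule: rkt.induct)
  case rbase
  then show ?case using Fam_base[of C k] unfolding SS_def by simp
next
  case (rstep V E D v)
  let ?F = "Fam k V E C" and ?FD = "{A \<in> Fam k V E C. D \<subseteq> A}"
  define N where "N = card ?F"
  define m where "m = card ?FD"
  define S where "S = SS k V E C"
  define t where "t = (\<Sum>A\<in>?FD. card A - k + 1)"
  define n where "n = card V - k"
  have rc: "finite C" "card C = k" "C \<subseteq> V" "kTree k V E" using rkt_C[OF rstep(1)] by auto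
  have b: "finite V" "k \<le> card V" using kTree_basic[OF rc(4)] by auto
  have fF: "finite ?F" using Fam_fin[OF b(1)] .
  have c1: "card (Fam k (insert v V) (E \<union> {{v, c} |c. c \<in> D}) C) = N + m"
    using step_counts(1)[OF rstep(1-5)] unfolding N_def m_def .
  have c2: "SS k (insert v V) (E \<union> {{v, c} |c. c \<in> D}) C = S + t"
    using step_counts(2)[OF rstep(1-5)] unfolding S_def t_def .
  have n': "card (insert v V) - k = n + 1" using b rstep(5) unfolding n_def by simp
  have VF: "V \<in> ?FD" using V_in_Fam[OF rc(4) rc(3)] rstep(2) by simp
  have ne: "?FD \<noteq> {}" using VF by blast
  have fFD: "finite ?FD" using fF by simp
  have m1: "1 \<le> m" unfolding m_def using ne fFD card_gt_0_iff[of ?FD] by linarith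
  have mN: "m \<le> N" unfolding m_def N_def using fF by (intro card_mono) auto
  have IH: "n + 1 \<le> N" "2 * S \<le> N * (N - 1)" "2 * S = N * (N - 1) \<longleftrightarrow> N = n + 1"
    using rstep.IH unfolding N_def S_def n_def by auto
  have tb: "t \<le> m * (n + 1)"
  proof -
    have "\<And>A. A \<in> ?FD \<Longrightarrow> card A - k + 1 \<le> n + 1"
    proof -
      fix A assume "A \<in> ?FD"
      then have "A \<subseteq> V" using Fam_sub by blast
      then have "card A \<le> card V" using b card_mono by blast
      then show "card A - k + 1 \<le> n + 1" unfolding n_def by simp
    qed
    then have "t \<le> card ?FD * (n + 1)" unfolding t_def using sum_bounded_above[of ?FD "\<lambda>A. card A - k + 1" "n+1"] by simp
    then show ?thesis unfolding m_def .
  qed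
  have tN: "t \<le> m * N" using tb IH(1) by (meson le_trans mult_le_mono2)
  have t1: "m = 1 \<Longrightarrow> t = n + 1"
  proof -
    assume "m = 1"
    then obtain x where "?FD = {x}" unfolding m_def using card_1_singletonE by blast
    then have "?FD = {V}" using VF by simp
    then show "t = n + 1" unfolding t_def n_def by simp
  qed
  have N1: "1 \<le> N" using IH(1) by simp
  have ex: "(N+m)*(N+m-1) = N*(N-1) + 2*(m*N) + m*(m-1)" using sq_expand[OF N1] .
  have mm: "m*(m-1) = 0 \<Longrightarrow> m = 1" using m1 by simp
  have g1: "n + 1 + 1 \<le> N + m" using IH(1) m1 by simp
  have g2: "2 * (S + t) \<le> (N+m)*(N+m-1)" unfolding ex using IH(2) tN by simp
  have g3: "2 * (S + t) = (N+m)*(N+m-1) \<longleftrightarrow> N + m = n + 1 + 1"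
  proof
    assume h: "2 * (S + t) = (N+m)*(N+m-1)"
    have h': "2 * (S + t) = N*(N-1) + 2*(m*N) + m*(m-1)" using h unfolding ex .
    have "m*(m-1) = 0 \<and> 2 * S = N * (N - 1) \<and> t = m * N" using arith_help[OF h' IH(2) tN] .
    then have "m*(m-1) = 0" "2 * S = N * (N - 1)" "t = m * N" by auto
    then have "m = 1" "t = N" using mm by auto
    then show "N + m = n + 1 + 1" using t1 by simp
  next
    assume h: "N + m = n + 1 + 1"
    then have "m = 1" "N = n + 1" using IH(1) m1 by auto
    then have "2 * S = N * (N - 1)" "t = N" using IH(3) t1 by auto
    then show "2 * (S + t) = (N+m)*(N+m-1)" unfolding ex using \<open>m = 1\<close> by simp
  qed
  show ?case unfolding c1 c2 n' using g1 g2 g3 by simp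
qed

lemma key_ineq:
  fixes a b :: real assumes a: "a > 0" and b: "b > 0"
  shows "(a+b) * log 2 (a+b) \<le> a * log 2 a + b * log 2 b + (a + b)"
proof -
  have l1: "ln ((a+b)/(2*a)) \<le> (a+b)/(2*a) - 1" using a b by (intro ln_le_minus_one) simp
  have l2: "ln ((a+b)/(2*b)) \<le> (a+b)/(2*b) - 1" using a b by (intro ln_le_minus_one) simp
  have e1: "ln ((a+b)/(2*a)) = ln (a+b) - ln 2 - ln a" using a b by (simp add: ln_div ln_mult)
  have e2: "ln ((a+b)/(2*b)) = ln (a+b) - ln 2 - ln b" using a b by (simp add: ln_div ln_mult)
  have m1: "a * ln ((a+b)/(2*a)) \<le> a * ((a+b)/(2*a) - 1)" using l1 a by (simp add: mult_left_mono)
  have m2: "b * ln ((a+b)/(2*b)) \<le> b * ((a+b)/(2*b) - 1)" using l2 b by (simp add: mult_left_mono)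
  have "a * ((a+b)/(2*a) - 1) + b * ((a+b)/(2*b) - 1) = 0" using a b by (simp add: field_simps)
  moreover have "a * (ln (a+b) - ln 2 - ln a) \<le> a * ((a+b)/(2*a) - 1)" using m1 e1 by simp
  moreover have "b * (ln (a+b) - ln 2 - ln b) \<le> b * ((a+b)/(2*b) - 1)" using m2 e2 by simp
  ultimately have "a * (ln (a+b) - ln 2 - ln a) + b * (ln (a+b) - ln 2 - ln b) \<le> 0"
    by linarith
  then have h: "(a+b) * ln (a+b) \<le> a * ln a + b * ln b + (a+b) * ln 2" by (simp add: algebra_simps)
  have ln2: "ln (2::real) > 0" by simp
  have "(a+b) * log 2 (a+b) = ((a+b) * ln (a+b)) / ln 2" unfolding log_def by simp
  also have "\<dots> \<le> (a * ln a + b * ln b + (a+b) * ln 2) / ln 2" using h ln2 by (simp add: divide_right_mono)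
  also have "\<dots> = a * log 2 a + b * log 2 b + (a + b)" unfolding log_def using ln2 by (simp add: field_simps)
  finally show ?thesis .
qed

lemma sum_card_Pow: "finite U \<Longrightarrow> 2 * (\<Sum>X\<in>Pow U. card X) = card U * 2 ^ card U"
proof (induction rule: finite_induct)
  case empty then show ?case by simp
next
  case (insert x U)
  have fP: "finite (Pow U)" using insert by simp
  have disj: "Pow U \<inter> insert x ` Pow U = {}" using insert by auto
  have inj: "inj_on (insert x) (Pow U)"
  proof (rule inj_onI)
    fix X Y assume h: "X \<in> Pow U" "Y \<in> Pow U" "insert x X = insert x Y"
    then have "insert x X - {x} = insert x Y - {x}" by simp
    moreover have "insert x X - {x} = X" "insert x Y - {x} = Y" using h insert by auto
    ultimately show "X = Y" by simp
  qed
  have "(\<Sum>X\<in>Pow (insert x U). card X) = (\<Sum>X\<in>Pow U. card X) + (\<Sum>X\<in>insert x ` Pow U. card X)"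
    unfolding Pow_insert by (rule sum.union_disjoint[OF fP _ disj]) (use fP in simp)
  also have "(\<Sum>X\<in>insert x ` Pow U. card X) = (\<Sum>X\<in>Pow U. card (insert x X))"
    by (rule sum.reindex[OF inj, unfolded comp_def])
  also have "\<dots> = (\<Sum>X\<in>Pow U. card X + 1)"
  proof (rule sum.cong[OF refl])
    fix X assume "X \<in> Pow U"
    then have "finite X" "x \<notin> X" using insert finite_subset by auto
    then show "card (insert x X) = card X + 1" by simp
  qed
  also have "\<dots> = (\<Sum>X\<in>Pow U. card X) + (\<Sum>X\<in>Pow U. 1)" by (rule sum.distrib)
  also have "(\<Sum>X\<in>Pow U. (1::nat)) = 2 ^ card U" using insert card_Pow[of U] by simp
  finally show ?case using insert by (simp add: algebra_simps)
qed

definition isBool :: "'a set \<Rightarrow> 'a set set \<Rightarrow> bool" where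
  "isBool B F \<longleftrightarrow> (\<exists>U. U \<inter> B = {} \<and> F = (\<lambda>X. B \<union> X) ` Pow U)"

lemma bool_eq:
  assumes "finite F" "U \<inter> B = {}" "F = (\<lambda>X. B \<union> X) ` Pow U"
  shows "real (card F) * log 2 (real (card F)) = 2 * (\<Sum>A\<in>F. real (card (A - B)))"
proof -
  have inj: "inj_on (\<lambda>X. B \<union> X) (Pow U)" unfolding inj_on_def using assms(2) by blast
  have "finite (Pow U)" using assms(1) assms(3) finite_image_iff[OF inj] by simp
  then have fU: "finite U" by simp
  have cF: "card F = 2 ^ card U" using assms(3) card_image[OF inj] card_Pow[of U] fU by simp
  have "(\<Sum>A\<in>F. real (card (A - B))) = (\<Sum>X\<in>Pow U. real (card ((B \<union> X) - B)))"
    unfolding assms(3) by (rule sum.reindex[OF inj, unfolded comp_def])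
  also have "\<dots> = (\<Sum>X\<in>Pow U. real (card X))"
  proof (rule sum.cong[OF refl])
    fix X assume "X \<in> Pow U"
    then have "(B \<union> X) - B = X" using assms(2) by auto
    then show "real (card ((B \<union> X) - B)) = real (card X)" by simp
  qed
  also have "\<dots> = real (\<Sum>X\<in>Pow U. card X)" by simp
  finally have "2 * (\<Sum>A\<in>F. real (card (A - B))) = real (2 * (\<Sum>X\<in>Pow U. card X))" by simp
  also have "\<dots> = real (card U) * 2 ^ card U" using sum_card_Pow[OF fU] by simp
  finally show ?thesis unfolding cF by (simp add: log_nat_power)
qed


lemma fam_lower:
  "finite F \<Longrightarrow> (\<forall>A\<in>F. finite A \<and> B \<subseteq> A) \<Longrightarrow> B \<in> F \<Longrightarrow> (\<forall>X\<in>F. \<forall>Y\<in>F. X \<union> Y \<in> F \<and> X \<inter> Y \<in> F) \<Longrightarrow>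
   real (card F) * log 2 (real (card F)) \<le> 2 * (\<Sum>A\<in>F. real (card (A - B))) \<and>
   (real (card F) * log 2 (real (card F)) = 2 * (\<Sum>A\<in>F. real (card (A - B))) \<longrightarrow> isBool B F)"
proof (induction "card F" arbitrary: F B rule: less_induct)
  case less
  note fF = less.prems(1) and sub = less.prems(2) and BF = less.prems(3) and cl = less.prems(4)
  show ?case
  proof (cases "F = {B}")
    case True
    have "isBool B F" unfolding isBool_def True by (rule exI[of _ "{}"]) simp
    then show ?thesis using True by simp
  next
    case False
    define G where "G = F - {B}"
    have fG: "finite G" "G \<noteq> {}" using fF False BF unfolding G_def by auto
    define c where "c = Min (card ` G)"
    have "c \<in> card ` G" unfolding c_def using fG by simp
    then obtain M where M: "M \<in> G" "card M = c" by auto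
    have Mmin: "\<And>X. X \<in> G \<Longrightarrow> card M \<le> card X" using M fG unfolding c_def by simp
    have MF: "M \<in> F" "M \<noteq> B" "B \<subseteq> M" "finite M" using M sub unfolding G_def by auto
    have "M - B \<noteq> {}" using MF by auto
    then obtain m where m: "m \<in> M" "m \<notin> B" by auto
    have a_fact: "\<And>A. A \<in> F \<Longrightarrow> m \<in> A \<Longrightarrow> M \<subseteq> A"
    proof -
      fix A assume A: "A \<in> F" "m \<in> A"
      have "A \<inter> M \<in> G" using cl A MF m unfolding G_def by auto
      then have "card M \<le> card (A \<inter> M)" using Mmin by simp
      then have "A \<inter> M = M" using card_seteq[OF MF(4)] by auto
      then show "M \<subseteq> A" by auto
    qed
    have b_fact: "\<And>A. A \<in> F \<Longrightarrow> m \<notin> A \<Longrightarrow> A \<inter> M = B"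
    proof (rule ccontr)
      fix A assume A: "A \<in> F" "m \<notin> A" "A \<inter> M \<noteq> B"
      have "A \<inter> M \<in> G" using cl A MF unfolding G_def by auto
      then have "card M \<le> card (A \<inter> M)" using Mmin by simp
      then have "A \<inter> M = M" using card_seteq[OF MF(4)] by auto
      then show False using A m by auto
    qed
    define F0 where "F0 = {A \<in> F. m \<notin> A}"
    define F1 where "F1 = {A \<in> F. m \<in> A}"
    have FU: "F = F0 \<union> F1" and disj: "F0 \<inter> F1 = {}" unfolding F0_def F1_def by auto
    have fF0: "finite F0" and fF1: "finite F1" using fF unfolding F0_def F1_def by auto
    have lt0: "card F0 < card F" using fF MF m unfolding F0_def by (intro psubset_card_mono) auto
    have lt1: "card F1 < card F" using fF BF m unfolding F1_def by (intro psubset_card_mono) auto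
    note IH0 = less.hyps[OF lt0 fF0, of B]
    note IH1 = less.hyps[OF lt1 fF1, of M]
    have P0: "real (card F0) * log 2 (real (card F0)) \<le> 2 * (\<Sum>A\<in>F0. real (card (A - B))) \<and>
      (real (card F0) * log 2 (real (card F0)) = 2 * (\<Sum>A\<in>F0. real (card (A - B))) \<longrightarrow> isBool B F0)"
      by (rule IH0) (use sub BF m cl in \<open>auto simp: F0_def\<close>)
    have P1: "real (card F1) * log 2 (real (card F1)) \<le> 2 * (\<Sum>A\<in>F1. real (card (A - M)))"
      using IH1 sub MF m cl a_fact unfolding F1_def by auto
    define phi where "phi = (\<lambda>A. A \<union> M)"
    have phi_inv: "\<And>A. A \<in> F0 \<Longrightarrow> phi A - (M - B) = A"
    proof -
      fix A assume A: "A \<in> F0"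
      then have "A \<inter> M = B" "B \<subseteq> A" using b_fact sub unfolding F0_def by auto
      then show "phi A - (M - B) = A" unfolding phi_def by auto
    qed
    have inj: "inj_on phi F0"
    proof (rule inj_onI)
      fix X Y assume "X \<in> F0" "Y \<in> F0" "phi X = phi Y"
      then show "X = Y" using phi_inv by metis
    qed
    have phiF: "phi ` F0 \<subseteq> F1" using cl MF m unfolding phi_def F0_def F1_def by auto
    have ab: "card F0 \<le> card F1" using card_inj_on_le[OF inj phiF fF1] .
    have F1ne: "M \<in> F1" using MF m unfolding F1_def by auto
    have b1: "1 \<le> card F1" using F1ne fF1 by (metis One_nat_def Suc_leI card_gt_0_iff empty_iff)
    have a1: "1 \<le> card F0" using BF m fF0 unfolding F0_def by (metis (mono_tags, lifting) One_nat_def Suc_leI card_gt_0_iff empty_iff mem_Collect_eq)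
    define d where "d = card (M - B)"
    have d1: "1 \<le> d" unfolding d_def using m MF
      by (metis Diff_iff One_nat_def Suc_leI card_gt_0_iff empty_iff finite_Diff)
    have split1: "\<And>A. A \<in> F1 \<Longrightarrow> real (card (A - B)) = real (card (A - M)) + real d"
    proof -
      fix A assume A: "A \<in> F1"
      then have MA: "M \<subseteq> A" "finite A" using a_fact sub unfolding F1_def by auto
      have "A - B = (A - M) \<union> (M - B)" using MA MF by auto
      moreover have "(A - M) \<inter> (M - B) = {}" by auto
      ultimately have "card (A - B) = card (A - M) + card (M - B)" using MA MF
        by (simp add: card_Un_disjoint)
      then show "real (card (A - B)) = real (card (A - M)) + real d" unfolding d_def by simp
    qed
    have sumF: "(\<Sum>A\<in>F. real (card (A - B))) = (\<Sum>A\<in>F0. real (card (A - B))) + (\<Sum>A\<in>F1. real (card (A - M))) + real (card F1) * real d"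
    proof -
      have "(\<Sum>A\<in>F. real (card (A - B))) = (\<Sum>A\<in>F0. real (card (A - B))) + (\<Sum>A\<in>F1. real (card (A - B)))"
        unfolding FU by (rule sum.union_disjoint[OF fF0 fF1 disj])
      also have "(\<Sum>A\<in>F1. real (card (A - B))) = (\<Sum>A\<in>F1. real (card (A - M)) + real d)"
        using split1 by (rule sum.cong[OF refl])
      also have "\<dots> = (\<Sum>A\<in>F1. real (card (A - M))) + real (card F1) * real d" by (simp add: sum.distrib)
      finally show ?thesis by simp
    qed
    have cFab: "card F = card F0 + card F1" unfolding FU using card_Un_disjoint[OF fF0 fF1 disj] .
    define a where "a = real (card F0)"
    define b where "b = real (card F1)"
    define s0 where "s0 = (\<Sum>A\<in>F0. real (card (A - B)))"
    define s1 where "s1 = (\<Sum>A\<in>F1. real (card (A - M)))"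
    define dd where "dd = real d"
    have ra: "a \<ge> 1" "b \<ge> 1" "a \<le> b" "dd \<ge> 1" unfolding a_def b_def dd_def using a1 b1 ab d1 by auto
    have bd: "b \<le> b * dd" using ra by simp
    have K: "(a+b) * log 2 (a+b) \<le> a * log 2 a + b * log 2 b + (a + b)" using key_ineq ra by simp
    have I0: "a * log 2 a \<le> 2 * s0" using P0 unfolding a_def s0_def by simp
    have I1: "b * log 2 b \<le> 2 * s1" using P1 unfolding b_def s1_def by simp
    have cF: "real (card F) = a + b" unfolding a_def b_def cFab by simp
    have sF: "(\<Sum>A\<in>F. real (card (A - B))) = s0 + s1 + b * dd" unfolding sumF s0_def s1_def b_def dd_def by simp
    have ineq: "(a+b) * log 2 (a+b) \<le> 2 * s0 + 2 * s1 + 2 * (b * dd)" using K I0 I1 bd ra by linarith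
    have eqc: "isBool B F" if eq: "(a+b) * log 2 (a+b) = 2 * s0 + 2 * s1 + 2 * (b * dd)"
    proof -
      have e0: "a * log 2 a = 2 * s0" using K I0 I1 bd ra eq by linarith
      have e2: "a + b = 2 * (b * dd)" using K I0 I1 bd ra eq by linarith
      have "b * dd \<le> b * 1" using e2 ra by linarith
      then have "dd \<le> 1" using ra by simp
      then have dd1: "dd = 1" using ra by simp
      then have aeqb: "a = b" using e2 by simp
      have "isBool B F0" using P0 e0 unfolding a_def s0_def by simp
      then obtain U0 where U0: "U0 \<inter> B = {}" "F0 = (\<lambda>X. B \<union> X) ` Pow U0" unfolding isBool_def by blast
      have "card (phi ` F0) = card F1" using card_image[OF inj] aeqb unfolding a_def b_def by simp
      then have phiF1: "phi ` F0 = F1" using card_seteq[OF fF1 phiF] by simp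
      have "d = 1" using dd1 unfolding dd_def by simp
      then have "M - B = {m}" using m MF unfolding d_def by (metis card_1_singletonE Diff_iff singletonD)
      then have Meq: "M = insert m B" using MF m by auto
      have "F = (\<lambda>X. B \<union> X) ` Pow (insert m U0)"
      proof -
        have "(\<lambda>X. B \<union> X) ` Pow (insert m U0) = (\<lambda>X. B \<union> X) ` Pow U0 \<union> (\<lambda>X. B \<union> X) ` (insert m ` Pow U0)"
          unfolding Pow_insert image_Un ..
        also have "(\<lambda>X. B \<union> X) ` (insert m ` Pow U0) = phi ` ((\<lambda>X. B \<union> X) ` Pow U0)"
          unfolding image_image phi_def Meq by auto
        finally show ?thesis using FU U0(2) phiF1 by simp
      qed
      moreover have "insert m U0 \<inter> B = {}" using U0 m by auto
      ultimately show ?thesis unfolding isBool_def by blast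
    qed
    have "2 * (\<Sum>A\<in>F. real (card (A - B))) = 2 * s0 + 2 * s1 + 2 * (b * dd)" unfolding sF by simp
    then show ?thesis using ineq eqc cF by simp
  qed
qed

definition starProp :: "'a set \<Rightarrow> 'a set set \<Rightarrow> 'a set \<Rightarrow> bool" where
  "starProp V E C \<longleftrightarrow> (\<forall>x\<in>V - C. \<forall>y\<in>C. {x, y} \<in> E) \<and> (\<forall>x\<in>V - C. \<forall>y\<in>V - C. x \<noteq> y \<longrightarrow> {x, y} \<notin> E)"

lemma edge_old_iff: "kTree k V E \<Longrightarrow> v \<notin> V \<Longrightarrow> x \<in> V \<Longrightarrow> y \<in> V \<Longrightarrow>
   {x,y} \<in> E \<union> {{v, c} |c. c \<in> D} \<longleftrightarrow> {x,y} \<in> E"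
  by (auto simp: doubleton_eq_iff)

lemma edge_new_iff: "kTree k V E \<Longrightarrow> v \<notin> V \<Longrightarrow> D \<subseteq> V \<Longrightarrow>
   {v,y} \<in> E \<union> {{v, c} |c. c \<in> D} \<longleftrightarrow> y \<in> D"
  using nb_new[of k V E v D] unfolding nb_def by auto

lemma star_rkt: "rkt k C V E \<Longrightarrow> (Fam k V E C = (\<lambda>X. C \<union> X) ` Pow (V - C) \<longleftrightarrow> starProp V E C)"
proof (induction rule: rkt.induct)
  case rbase
  then show ?case using Fam_base[of C k] unfolding starProp_def by simp
next
  case (rstep V E D v)
  let ?F = "Fam k V E C" and ?FD = "{A \<in> Fam k V E C. D \<subseteq> A}"
  let ?E' = "E \<union> {{v, c} |c. c \<in> D}"
  have rc: "finite C" "card C = k" "C \<subseteq> V" "kTree k V E" using rkt_C[OF rstep(1)] by auto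
  have b: "finite V" "k \<le> card V" using kTree_basic[OF rc(4)] by auto
  have fD: "finite D" using rstep(2) b finite_subset by blast
  have eq: "Fam k (insert v V) ?E' C = ?F \<union> insert v ` ?FD" using Fam_step_rkt[OF rstep(1-5)] .
  have nv: "\<And>X. X \<in> ?F \<Longrightarrow> v \<notin> X \<and> C \<subseteq> X \<and> X \<subseteq> V" using Fam_sub rstep(5) by blast
  have vC: "v \<notin> C" using rc rstep(5) by auto
  have V'C: "insert v V - C = insert v (V - C)" using vC by auto
  have Fv: "?F = {A \<in> ?F \<union> insert v ` ?FD. v \<notin> A}" using nv by auto
  have c1: "(?F \<union> insert v ` ?FD = (\<lambda>X. C \<union> X) ` Pow (insert v V - C)) \<longleftrightarrow>
            (?F = (\<lambda>X. C \<union> X) ` Pow (V - C) \<and> D = C)"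
  proof
    assume h: "?F \<union> insert v ` ?FD = (\<lambda>X. C \<union> X) ` Pow (insert v V - C)"
    have "insert v C \<in> (\<lambda>X. C \<union> X) ` Pow (insert v V - C)" using vC by (intro image_eqI[of _ _ "{v}"]) auto
    then have "insert v C \<in> ?F \<union> insert v ` ?FD" using h by simp
    moreover have "insert v C \<notin> ?F" using nv by auto
    ultimately obtain A0 where A0: "insert v C = insert v A0" "A0 \<in> ?F" "D \<subseteq> A0" by auto
    have "A0 = C" using A0 nv[OF A0(2)] vC by (metis insert_ident)
    then have DC: "D \<subseteq> C" using A0 by simp
    have DC': "D = C" using card_subset_eq[OF rc(1) DC] rstep(3) rc(2) by simp
    have "?F = {A \<in> (\<lambda>X. C \<union> X) ` Pow (insert v V - C). v \<notin> A}" using Fv h by simp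
    also have "\<dots> = (\<lambda>X. C \<union> X) ` Pow (V - C)" unfolding V'C using vC rstep(5) by auto
    finally show "?F = (\<lambda>X. C \<union> X) ` Pow (V - C) \<and> D = C" using DC' by simp
  next
    assume h: "?F = (\<lambda>X. C \<union> X) ` Pow (V - C) \<and> D = C"
    then have FD: "?FD = ?F" using nv by auto
    have "(\<lambda>X. C \<union> X) ` Pow (insert v V - C) = (\<lambda>X. C \<union> X) ` Pow (V - C) \<union> (\<lambda>X. C \<union> X) ` (insert v ` Pow (V - C))"
      unfolding V'C Pow_insert image_Un ..
    also have "(\<lambda>X. C \<union> X) ` (insert v ` Pow (V - C)) = insert v ` ((\<lambda>X. C \<union> X) ` Pow (V - C))"
      unfolding image_image by auto
    finally show "?F \<union> insert v ` ?FD = (\<lambda>X. C \<union> X) ` Pow (insert v V - C)" using h FD by simp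
  qed
  have c2: "starProp (insert v V) ?E' C \<longleftrightarrow> starProp V E C \<and> D = C"
  proof
    assume h: "starProp (insert v V) ?E' C"
    have "C \<subseteq> D"
    proof
      fix y assume "y \<in> C"
      then have "{v,y} \<in> ?E'" using h vC unfolding starProp_def by auto
      then show "y \<in> D" using edge_new_iff[OF rc(4) rstep(5) rstep(2)] by simp
    qed
    then have "D = C" using card_subset_eq[OF fD] rstep(3) rc(2) by metis
    moreover have "starProp V E C"
      unfolding starProp_def
    proof (intro conjI ballI impI)
      fix x y assume xy: "x \<in> V - C" "y \<in> C"
      then have "{x,y} \<in> ?E'" using h unfolding starProp_def by auto
      then show "{x,y} \<in> E" using edge_old_iff[OF rc(4) rstep(5)] xy rc(3) by blast
    next
      fix x y assume xy: "x \<in> V - C" "y \<in> V - C" "x \<noteq> y"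
      have h2: "\<forall>x\<in>insert v V - C. \<forall>y\<in>insert v V - C. x \<noteq> y \<longrightarrow> {x,y} \<notin> ?E'"
        using h unfolding starProp_def by (rule conjunct2)
      have "{x,y} \<notin> ?E'" by (rule mp[OF bspec[OF bspec[OF h2]]]) (use xy in auto)
      then show "{x,y} \<notin> E" by blast
    qed
    ultimately show "starProp V E C \<and> D = C" by simp
  next
    assume h: "starProp V E C \<and> D = C"
    have o: "\<And>x y. x \<in> V \<Longrightarrow> y \<in> V \<Longrightarrow> {x,y} \<in> ?E' \<longleftrightarrow> {x,y} \<in> E"
      using edge_old_iff[OF rc(4) rstep(5)] by blast
    have n: "\<And>y. {v,y} \<in> ?E' \<longleftrightarrow> y \<in> C" using edge_new_iff[OF rc(4) rstep(5) rstep(2)] h by simp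
    have n': "\<And>y. {y,v} \<in> ?E' \<longleftrightarrow> y \<in> C" using n by (simp add: insert_commute)
    show "starProp (insert v V) ?E' C"
      unfolding starProp_def
    proof (intro conjI ballI impI)
      fix x y assume "x \<in> insert v V - C" "y \<in> C"
      then show "{x,y} \<in> ?E'" using h o n rc(3) unfolding starProp_def by auto
    next
      fix x y assume xy: "x \<in> insert v V - C" "y \<in> insert v V - C" "x \<noteq> y"
      show "{x,y} \<notin> ?E'"
      proof (cases "x = v")
        case True then show ?thesis using n xy by simp
      next
        case False
        show ?thesis
        proof (cases "y = v")
          case True then show ?thesis using n' xy by simp
        next
          case False
          then show ?thesis using \<open>x \<noteq> v\<close> xy h o unfolding starProp_def by auto
        qed
      qed
    qed
  qed
  show ?case unfolding eq V'C[symmetric] c1 c2 using rstep.IH by simp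
qed

definition cnt :: "nat \<Rightarrow> 'a set \<Rightarrow> 'a set set \<Rightarrow> 'a \<Rightarrow> nat" where
  "cnt k V E x = card {S. kClique (k + 1) V E S \<and> x \<in> S}"

lemma kLeaf_cnt: "kLeaf k V E x \<longleftrightarrow> x \<in> V \<and> cnt k V E x = 1"
  unfolding kLeaf_def cnt_def ..

lemma K1_fin: "kTree k V E \<Longrightarrow> finite {S. kClique (k + 1) V E S \<and> P S}"
proof -
  assume "kTree k V E"
  then have "finite V" using kTree_basic by blast
  moreover have "{S. kClique (k + 1) V E S \<and> P S} \<subseteq> Pow V" by (auto simp: kClique_def)
  ultimately show ?thesis using finite_subset by blast
qed

lemma K1_step:
  assumes T: "kTree k V E" and D: "D \<subseteq> V" "card D = k" "isClique E D" and v: "v \<notin> V"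
  shows "{S. kClique (k + 1) (insert v V) (E \<union> {{v, c} |c. c \<in> D}) S}
        = insert (insert v D) {S. kClique (k + 1) V E S}"
proof -
  let ?E' = "E \<union> {{v, c} |c. c \<in> D}"
  have b: "finite V" using kTree_basic[OF T] by auto
  have fD: "finite D" using D b finite_subset by blast
  have vD: "v \<notin> D" using D v by auto
  show ?thesis
  proof
    show "{S. kClique (k + 1) (insert v V) ?E' S} \<subseteq> insert (insert v D) {S. kClique (k + 1) V E S}"
    proof
      fix S assume "S \<in> {S. kClique (k + 1) (insert v V) ?E' S}"
      then have S: "S \<subseteq> insert v V" "finite S" "card S = k + 1" "isClique ?E' S" unfolding kClique_def by auto
      show "S \<in> insert (insert v D) {S. kClique (k + 1) V E S}"
      proof (cases "v \<in> S")
        case False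
        then have SV: "S \<subseteq> V" using S by auto
        then have "isClique E S" using clique_old[OF T v SV] S by simp
        then show ?thesis using S SV unfolding kClique_def by simp
      next
        case True
        have sub: "S - {v} \<subseteq> D"
        proof
          fix x assume x: "x \<in> S - {v}"
          then have "{v,x} \<in> ?E'" using S(4) True unfolding isClique_def by auto
          then show "x \<in> D" using nb_new[OF T v D(1)] unfolding nb_def by auto
        qed
        have "card (S - {v}) = k" using S True by simp
        then have "S - {v} = D" using card_subset_eq[OF fD sub] D by simp
        then have "S = insert v D" using True by auto
        then show ?thesis by simp
      qed
    qed
  next
    show "insert (insert v D) {S. kClique (k + 1) V E S} \<subseteq> {S. kClique (k + 1) (insert v V) ?E' S}"
    proof
      fix S assume "S \<in> insert (insert v D) {S. kClique (k + 1) V E S}"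
      then show "S \<in> {S. kClique (k + 1) (insert v V) ?E' S}"
      proof
        assume S: "S = insert v D"
        have "isClique ?E' (insert v D)" using D(3) unfolding isClique_def by auto
        then show ?thesis using S D fD vD unfolding kClique_def by auto
      next
        assume "S \<in> {S. kClique (k + 1) V E S}"
        then show ?thesis unfolding kClique_def isClique_def by auto
      qed
    qed
  qed
qed

lemma cnt_step:
  assumes T: "kTree k V E" and D: "D \<subseteq> V" "card D = k" "isClique E D" and v: "v \<notin> V"
  shows "cnt k (insert v V) (E \<union> {{v, c} |c. c \<in> D}) x = cnt k V E x + (if x \<in> insert v D then 1 else 0)"
proof -
  let ?K = "{S. kClique (k + 1) V E S \<and> x \<in> S}"
  have e: "{S. kClique (k + 1) (insert v V) (E \<union> {{v, c} |c. c \<in> D}) S \<and> x \<in> S}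
     = (if x \<in> insert v D then insert (insert v D) ?K else ?K)"
    using K1_step[OF T D v] by auto
  have nin: "insert v D \<notin> ?K" using v unfolding kClique_def by auto
  have f: "finite ?K" using K1_fin[OF T] .
  show ?thesis
  proof (cases "x \<in> insert v D")
    case True
    then show ?thesis unfolding cnt_def e using card_insert_disjoint[OF f nin] by simp
  next
    case False
    then show ?thesis unfolding cnt_def e by simp
  qed
qed

lemma cnt_v_zero: "kTree k V E \<Longrightarrow> v \<notin> V \<Longrightarrow> cnt k V E v = 0"
proof -
  assume "v \<notin> V"
  then have e: "{S. kClique (k + 1) V E S \<and> v \<in> S} = {}" unfolding kClique_def by auto
  show ?thesis by (simp only: cnt_def e card.empty)
qed

lemma K1_small: "kTree k V E \<Longrightarrow> card V = k \<Longrightarrow> cnt k V E x = 0"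
proof -
  assume T: "kTree k V E" "card V = k"
  have "finite V" using kTree_basic[OF T(1)] by simp
  have e: "{S. kClique (k + 1) V E S \<and> x \<in> S} = {}"
  proof (rule ccontr)
    assume "{S. kClique (k + 1) V E S \<and> x \<in> S} \<noteq> {}"
    then obtain S where S: "S \<subseteq> V" "card S = k + 1" unfolding kClique_def by auto
    have "card S \<le> card V" by (rule card_mono[OF \<open>finite V\<close> S(1)])
    then show False using S T(2) by simp
  qed
  show ?thesis by (simp only: cnt_def e card.empty)
qed

lemma cnt_pos: "kTree k V E \<Longrightarrow> Suc k \<le> card V \<Longrightarrow> x \<in> V \<Longrightarrow> 1 \<le> cnt k V E x"
proof (induction arbitrary: x rule: kTree.induct)
  case (base V) then show ?case by simp
next
  case (step V E C v)
  have b: "finite V" "k \<le> card V" using kTree_basic[OF step(1)] by auto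
  have cs: "cnt k (insert v V) (E \<union> {{v, c} |c. c \<in> C}) x = cnt k V E x + (if x \<in> insert v C then 1 else 0)"
    using cnt_step[OF step(1-5)] .
  show ?case
  proof (cases "x \<in> insert v C")
    case True then show ?thesis using cs by simp
  next
    case False
    then have xV: "x \<in> V" using step by auto
    have "card V \<noteq> k"
    proof
      assume "card V = k"
      then have "C = V" using card_subset_eq[OF b(1) step(2)] step(3) by simp
      then show False using False xV by simp
    qed
    then have "1 \<le> cnt k V E x" using step.IH[OF _ xV] b by simp
    then show ?thesis using cs by simp
  qed
qed

lemma ext_clique: "kTree k V E \<Longrightarrow> Suc k \<le> card V \<Longrightarrow> kClique k V E D \<Longrightarrow> \<exists>K. kClique (k + 1) V E K \<and> D \<subseteq> K"
proof (induction arbitrary: D rule: kTree.induct)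
  case (base V) then show ?case by simp
next
  case (step V E C v)
  let ?E' = "E \<union> {{v, c} |c. c \<in> C}"
  have b: "finite V" "k \<le> card V" using kTree_basic[OF step(1)] by auto
  have K: "{S. kClique (k + 1) (insert v V) ?E' S} = insert (insert v C) {S. kClique (k + 1) V E S}"
    using K1_step[OF step(1-5)] .
  have Kin: "kClique (k + 1) (insert v V) ?E' (insert v C)" using K by blast
  have Dp: "D \<subseteq> insert v V" "finite D" "card D = k" "isClique ?E' D" using step.prems(2) unfolding kClique_def by auto
  show ?case
  proof (cases "v \<in> D")
    case True
    have "D - {v} \<subseteq> C"
    proof
      fix x assume x: "x \<in> D - {v}"
      then have "{v,x} \<in> ?E'" using Dp(4) True unfolding isClique_def by auto
      then show "x \<in> C" using nb_new[OF step(1) step(5) step(2)] unfolding nb_def by auto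
    qed
    then have "D \<subseteq> insert v C" by auto
    then show ?thesis using Kin by blast
  next
    case False
    then have DV: "D \<subseteq> V" using Dp by auto
    show ?thesis
    proof (cases "card V = k")
      case True
      then have "C = V" using card_subset_eq[OF b(1) step(2)] step(3) by simp
      then show ?thesis using Kin DV by blast
    next
      case False
      then have ck: "Suc k \<le> card V" using b by simp
      have "isClique E D" using clique_old[OF step(1) step(5) DV] Dp by simp
      then have "kClique k V E D" using Dp DV unfolding kClique_def by simp
      then obtain K0 where K0: "kClique (k + 1) V E K0" "D \<subseteq> K0" using step.IH[OF ck] by blast
      then show ?thesis using K by blast
    qed
  qed
qed


lemma leaves_step:
  assumes T: "kTree k V E" and D: "D \<subseteq> V" "card D = k" "isClique E D" and v: "v \<notin> V"
    and ck: "Suc k \<le> card V"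
  shows "{x. kLeaf k (insert v V) (E \<union> {{v, c} |c. c \<in> D}) x} = insert v ({x. kLeaf k V E x} - D)"
proof -
  have cs: "\<And>x. cnt k (insert v V) (E \<union> {{v, c} |c. c \<in> D}) x = cnt k V E x + (if x \<in> insert v D then 1 else 0)"
    using cnt_step[OF T D v] .
  have c0: "cnt k V E v = 0" using cnt_v_zero[OF T v] .
  have cp: "\<And>x. x \<in> V \<Longrightarrow> 1 \<le> cnt k V E x" using cnt_pos[OF T ck] .
  show ?thesis
  proof (intro set_eqI iffI)
    fix x assume "x \<in> {x. kLeaf k (insert v V) (E \<union> {{v, c} |c. c \<in> D}) x}"
    then have x: "x \<in> insert v V" "cnt k V E x + (if x \<in> insert v D then 1 else 0) = 1"
      unfolding kLeaf_cnt cs by auto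
    show "x \<in> insert v ({x. kLeaf k V E x} - D)"
    proof (cases "x = v")
      case False
      then have xV: "x \<in> V" using x by simp
      have "x \<notin> D" using x(2) cp[OF xV] False by (auto split: if_splits)
      then show ?thesis using x xV False unfolding kLeaf_cnt by simp
    qed simp
  next
    fix x assume x: "x \<in> insert v ({x. kLeaf k V E x} - D)"
    show "x \<in> {x. kLeaf k (insert v V) (E \<union> {{v, c} |c. c \<in> D}) x}"
    proof (cases "x = v")
      case True then show ?thesis unfolding kLeaf_cnt cs using c0 by simp
    next
      case False
      then have "x \<in> V" "cnt k V E x = 1" "x \<notin> D" using x unfolding kLeaf_cnt by auto
      then show ?thesis unfolding kLeaf_cnt cs using False by simp
    qed
  qed
qed

lemma leaves_step0:
  assumes T: "kTree k V E" and D: "D \<subseteq> V" "card D = k" "isClique E D" and v: "v \<notin> V"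
    and ck: "card V = k"
  shows "{x. kLeaf k (insert v V) (E \<union> {{v, c} |c. c \<in> D}) x} = insert v V"
proof -
  have cs: "\<And>x. cnt k (insert v V) (E \<union> {{v, c} |c. c \<in> D}) x = cnt k V E x + (if x \<in> insert v D then 1 else 0)"
    using cnt_step[OF T D v] .
  have c0: "\<And>x. cnt k V E x = 0" using K1_small[OF T ck] .
  have "finite V" using kTree_basic[OF T] by simp
  then have DV: "D = V" using card_subset_eq[OF _ D(1)] D(2) ck by simp
  have cs': "\<And>x. cnt k (insert v V) (E \<union> {{v, c} |c. c \<in> D}) x = (if x \<in> insert v V then 1 else 0)"
    using cs c0 DV by simp
  show ?thesis unfolding kLeaf_cnt cs' by auto
qed

lemma rkt_card_k: "rkt k C V E \<Longrightarrow> card V = k \<Longrightarrow> V = C \<and> E = cmp C"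
proof -
  assume r: "rkt k C V E" "card V = k"
  have rc: "finite C" "card C = k" "C \<subseteq> V" "kTree k V E" using rkt_C[OF r(1)] by auto
  have "finite V" using kTree_basic[OF rc(4)] by simp
  then have "V = C" using card_subset_eq[OF _ rc(3)] rc(2) r(2) by simp
  then show ?thesis using kTree_card_k[OF rc(4) r(2)] by simp
qed


lemma chain_rkt: "rkt k C V E \<Longrightarrow> 1 \<le> k \<Longrightarrow> Suc k \<le> card V \<Longrightarrow>
  (card (Fam k V E C) = card V - k + 1 \<longleftrightarrow>
     (card V = k + 1 \<or> card {x. kLeaf k V E x} = 2) \<and> (\<exists>x\<in>C. kLeaf k V E x))"
proof (induction rule: rkt.induct)
  case rbase then show ?case by simp
next
  case (rstep V E D v)
  let ?E' = "E \<union> {{v, c} |c. c \<in> D}"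
  let ?F = "Fam k V E C" and ?FD = "{A \<in> Fam k V E C. D \<subseteq> A}"
  let ?L = "{x. kLeaf k V E x}" and ?L' = "{x. kLeaf k (insert v V) ?E' x}"
  have rc: "finite C" "card C = k" "C \<subseteq> V" "kTree k V E" using rkt_C[OF rstep(1)] by auto
  have b: "finite V" "k \<le> card V" using kTree_basic[OF rc(4)] by auto
  have cV': "card (insert v V) = card V + 1" using b rstep(5) by simp
  have vC: "v \<notin> C" using rc rstep(5) by auto
  have N': "card (Fam k (insert v V) ?E' C) = card ?F + card ?FD" using step_counts(1)[OF rstep(1-5)] .
  have fF: "finite ?F" using Fam_fin[OF b(1)] .
  have VFD: "V \<in> ?FD" using V_in_Fam[OF rc(4) rc(3)] rstep(2) by simp
  have m1: "1 \<le> card ?FD" using VFD fF card_gt_0_iff[of ?FD] by fastforce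
  have LV: "?L \<subseteq> V" unfolding kLeaf_def by auto
  have L'V: "?L' \<subseteq> insert v V" unfolding kLeaf_def by auto
  have fL': "finite ?L'" using finite_subset[OF L'V] b by simp
  show ?case
  proof (cases "card V = k")
    case True
    have VC: "V = C" "E = cmp C" using rkt_card_k[OF rstep(1) True] by auto
    have F1: "?F = {C}" using Fam_base[OF rc(1) rc(2)] VC by simp
    have "?FD = {C}" using F1 rstep(2) VC by auto
    then have "card (Fam k (insert v V) ?E' C) = 2" using N' F1 by simp
    moreover have "?L' = insert v V" using leaves_step0[OF rc(4) rstep(2-5) True] .
    moreover have "\<exists>x\<in>C. x \<in> insert v V" using rc rstep.prems(1) VC by (metis card.empty equals0I le_zero_eq not_one_le_zero insertI2)
    ultimately show ?thesis using cV' True by auto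
  next
    case False
    then have ckV: "Suc k \<le> card V" using b by simp
    from rstep(1) obtain V0 E0 D0 w where T0: "V = insert w V0" "E = E0 \<union> {{w, c} |c. c \<in> D0}"
      "rkt k C V0 E0" "D0 \<subseteq> V0" "card D0 = k" "isClique E0 D0" "w \<notin> V0"
    proof cases
      case rbase then show ?thesis using False rc by simp
    next
      case (rstep V0 E0 D0 w) then show ?thesis using that by blast
    qed
    have rc0: "C \<subseteq> V0" "kTree k V0 E0" using rkt_C[OF T0(3)] by auto
    have b0: "finite V0" "k \<le> card V0" using kTree_basic[OF rc0(2)] by auto
    have cV: "card V = card V0 + 1" using T0 b0 by simp
    have wC: "w \<notin> C" using rc0 T0 by auto
    have wV: "w \<in> V" using T0 by simp
    let ?Fz = "Fam k V0 E0 C" and ?FzD = "{A \<in> Fam k V0 E0 C. D0 \<subseteq> A}"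
    have Feq: "Fam k V E C = ?Fz \<union> insert w ` ?FzD" unfolding T0(1) T0(2) by (rule Fam_step_rkt[OF T0(3-7)])
    have N: "card (Fam k V E C) = card ?Fz + card ?FzD" unfolding T0(1) T0(2) by (rule step_counts(1)[OF T0(3-7)])
    have fF0: "finite ?Fz" using Fam_fin[OF b0(1)] .
    have U0: "card V0 - k + 1 \<le> card ?Fz" using upper_rkt[OF T0(3)] by simp
    have U: "card V - k + 1 \<le> card ?F" using upper_rkt[OF rstep(1)] by simp
    have nw: "\<And>X. X \<in> ?Fz \<Longrightarrow> w \<notin> X" using Fam_sub T0(7) by blast
    have chain_i: "card (Fam k (insert v V) ?E' C) = card (insert v V) - k + 1 \<longleftrightarrow>
                   card ?F = card V - k + 1 \<and> w \<in> D"
    proof (cases "w \<in> D")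
      case False
      then have DV0: "D \<subseteq> V0" using rstep(2) T0(1) by auto
      have "V0 \<in> ?Fz" using V_in_Fam[OF rc0(2) rc0(1)] .
      then have "V0 \<in> ?FD" using Feq DV0 by simp
      moreover have "V0 \<noteq> V" using T0 by auto
      ultimately have "{V0, V} \<subseteq> ?FD" using VFD by simp
      then have "card {V0, V} \<le> card ?FD" using fF by (intro card_mono) auto
      then have "2 \<le> card ?FD" using \<open>V0 \<noteq> V\<close> by simp
      then show ?thesis using N' U cV' False by simp
    next
      case True
      have sub: "?FD \<subseteq> insert w ` ?FzD"
      proof
        fix A assume A: "A \<in> ?FD"
        then have "w \<in> A" using True by auto
        then have "A \<notin> ?Fz" using nw by blast
        then show "A \<in> insert w ` ?FzD" using A Feq by auto
      qed
      have "card ?FD \<le> card (insert w ` ?FzD)" using sub fF0 by (intro card_mono) auto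
      also have "\<dots> \<le> card ?FzD" by (rule card_image_le) (use fF0 in simp)
      finally have mm: "card ?FD \<le> card ?FzD" .
      show ?thesis
      proof
        assume "card (Fam k (insert v V) ?E' C) = card (insert v V) - k + 1"
        then show "card ?F = card V - k + 1 \<and> w \<in> D" using N' U m1 cV' b True by simp
      next
        assume "card ?F = card V - k + 1 \<and> w \<in> D"
        then have "card ?FzD \<le> 1" using N U0 cV b0 by (simp add: Suc_diff_le)
        then show "card (Fam k (insert v V) ?E' C) = card (insert v V) - k + 1" using mm m1 N' cV' \<open>card ?F = card V - k + 1 \<and> w \<in> D\<close> b by simp
      qed
    qed
    have Leq: "?L' = insert v (?L - D)" using leaves_step[OF rc(4) rstep(2-5) ckV] .
    have cs0: "\<And>x. cnt k V E x = cnt k V0 E0 x + (if x \<in> insert w D0 then 1 else 0)"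
      unfolding T0(1) T0(2) by (rule cnt_step[OF rc0(2) T0(4-7)])
    have wL: "w \<in> ?L" using cs0[of w] cnt_v_zero[OF rc0(2) T0(7)] wV unfolding kLeaf_cnt by simp
    have Dsub: "w \<in> D \<Longrightarrow> D \<subseteq> insert w D0"
    proof
      fix x assume wD: "w \<in> D" and x: "x \<in> D"
      show "x \<in> insert w D0"
      proof (cases "x = w")
        case False
        then have "{w,x} \<in> E" using rstep(4) wD x unfolding isClique_def by auto
        then have "x \<in> nb (E0 \<union> {{w, c} |c. c \<in> D0}) w" using T0(2) unfolding nb_def by simp
        then show ?thesis using nb_new[OF rc0(2) T0(7) T0(4)] by simp
      qed simp
    qed
    have v_notin_L: "v \<notin> ?L" using LV rstep(5) by auto
    have cV'2: "card (insert v V) \<noteq> k + 1" using cV' ckV by simp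
    show ?thesis
    proof (cases "card V0 = k")
      case True
      have V0C: "V0 = C" "E0 = cmp C" using rkt_card_k[OF T0(3) True] by auto
      have LisV: "?L = V" unfolding T0(1) T0(2) by (rule leaves_step0[OF rc0(2) T0(4-7) True])
      have F0C: "?Fz = {C}" using Fam_base[OF rc(1) rc(2)] V0C by simp
      have "?FzD = {C}" using F0C T0(4) V0C by auto
      then have chainT: "card ?F = card V - k + 1" using N F0C cV True by simp
      have cVk: "card V = k + 1" using cV True by simp
      have "card (V - D) = card V - card D" using card_Diff_subset[OF finite_subset[OF rstep(2) b(1)] rstep(2)] .
      then have "card (V - D) = 1" using rstep(3) cVk by simp
      then obtain y where y: "V - D = {y}" using card_1_singletonE by blast
      have yV: "y \<in> V" "y \<noteq> v" using y rstep(5) by auto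
      have L'y: "?L' = {v, y}" using Leq LisV y by auto
      have c2: "card ?L' = 2" using L'y yV by simp
      have "(\<exists>x\<in>C. kLeaf k (insert v V) ?E' x) \<longleftrightarrow> y \<in> C" using L'y vC by auto
      moreover have "y \<in> C \<longleftrightarrow> w \<in> D" using y yV T0(1) V0C wC by auto
      ultimately show ?thesis using chain_i chainT c2 cV'2 by auto
    next
      case False
      then have ck0: "Suc k \<le> card V0" using b0 by simp
      have iv: "\<And>z. z \<in> D0 \<Longrightarrow> z \<notin> ?L"
      proof
        fix z assume z: "z \<in> D0" "z \<in> ?L"
        have "1 \<le> cnt k V0 E0 z" using cnt_pos[OF rc0(2) ck0] z T0(4) by auto
        then have "2 \<le> cnt k V E z" using cs0[of z] z by simp
        then show False using z unfolding kLeaf_cnt by simp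
      qed
      have cVne: "card V \<noteq> k + 1" using cV ck0 by simp
      have IH: "card ?F = card V - k + 1 \<longleftrightarrow> card ?L = 2 \<and> (\<exists>x\<in>C. x \<in> ?L)"
        using rstep.IH[OF rstep.prems(1) ckV] cVne by simp
      have fL: "finite ?L" using finite_subset[OF LV b(1)] .
      show ?thesis
      proof
        assume ch: "card (Fam k (insert v V) ?E' C) = card (insert v V) - k + 1"
        then have chT: "card ?F = card V - k + 1" and wD: "w \<in> D" using chain_i by auto
        then obtain l where l: "l \<in> C" "l \<in> ?L" and cL: "card ?L = 2" using IH by auto
        have lw: "l \<noteq> w" using l wC by auto
        have "{w, l} \<subseteq> ?L" using wL l by simp
        moreover have "card {w, l} = 2" using lw by simp
        ultimately have "{w, l} = ?L" using card_seteq[OF fL, of "{w,l}"] cL by simp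
        then have Lwl: "?L = {w, l}" by simp
        have "l \<notin> D"
        proof
          assume "l \<in> D"
          then have "l \<in> D0" using Dsub[OF wD] lw by auto
          then show False using iv l by blast
        qed
        then have "?L' = {v, l}" using Leq Lwl wD by auto
        moreover have "v \<noteq> l" using l vC by auto
        ultimately show "(card (insert v V) = k + 1 \<or> card ?L' = 2) \<and> (\<exists>x\<in>C. kLeaf k (insert v V) ?E' x)"
          using l by auto
      next
        assume h: "(card (insert v V) = k + 1 \<or> card ?L' = 2) \<and> (\<exists>x\<in>C. kLeaf k (insert v V) ?E' x)"
        then obtain l where l: "l \<in> C" "l \<in> ?L'" and cL': "card ?L' = 2" using cV'2 by auto
        have lv: "l \<noteq> v" using l vC by auto
        have lL: "l \<in> ?L" "l \<notin> D" using l lv Leq by auto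
        have "{v, l} \<subseteq> ?L'" using l Leq by auto
        moreover have "card {v, l} = 2" using lv by simp
        ultimately have "{v, l} = ?L'" using card_seteq[OF fL', of "{v,l}"] cL' by simp
        then have L'vl: "?L' = {v, l}" by simp
        have lw: "l \<noteq> w" using l wC by auto
        have wD: "w \<in> D"
        proof (rule ccontr)
          assume "w \<notin> D"
          then have "w \<in> ?L'" using Leq wL by auto
          then show False using L'vl lw wV rstep(5) by auto
        qed
        have "?L = {w, l}"
        proof
          show "?L \<subseteq> {w, l}"
          proof
            fix x assume x: "x \<in> ?L"
            show "x \<in> {w, l}"
            proof (cases "x \<in> D")
              case True
              then have "x \<in> insert w D0" using Dsub[OF wD] by auto
              then show ?thesis using iv x by auto
            next
              case False
              then have "x \<in> ?L'" using Leq x by auto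
              moreover have "x \<noteq> v" using x v_notin_L by auto
              ultimately show ?thesis using L'vl by auto
            qed
          qed
        next
          show "{w, l} \<subseteq> ?L" using wL lL by simp
        qed
        then have "card ?L = 2" using lw by simp
        then have "card ?F = card V - k + 1" using IH lL l by auto
        then show "card (Fam k (insert v V) ?E' C) = card (insert v V) - k + 1" using chain_i wD by simp
      qed
    qed
  qed
qed

lemma isBool_iff:
  assumes "\<forall>A\<in>F. C \<subseteq> A \<and> A \<subseteq> V" "V \<in> F"
  shows "isBool C F \<longleftrightarrow> F = (\<lambda>X. C \<union> X) ` Pow (V - C)"
proof
  assume "isBool C F"
  then obtain U where U: "U \<inter> C = {}" "F = (\<lambda>X. C \<union> X) ` Pow U" unfolding isBool_def by blast
  have "C \<union> U \<in> F" using U by blast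
  then have "U \<subseteq> V - C" using assms U by auto
  moreover have "V - C \<subseteq> U" using assms(2) U by auto
  ultimately show "F = (\<lambda>X. C \<union> X) ` Pow (V - C)" using U by simp
next
  assume "F = (\<lambda>X. C \<union> X) ` Pow (V - C)"
  then show "isBool C F" unfolding isBool_def by blast
qed

theorem lemma4p2:
  fixes k :: nat and V :: "'a set" and E :: "'a set set" and C :: "'a set"
  assumes "k \<ge> 1" and "kTree k V E" and "kClique k V E C"
  shows "real k + log 2 (real (Ncount k V E C)) / 2 \<le> mu k V E C
     \<and> mu k V E C \<le> (real (Ncount k V E C) + 2 * real k - 1) / 2
     \<and> (real k + log 2 (real (Ncount k V E C)) / 2 = mu k V E C \<longleftrightarrow> kStarBase k V E C)
     \<and> (card V \<ge> k + 1 \<longrightarrow>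
           (mu k V E C = (real (Ncount k V E C) + 2 * real k - 1) / 2 \<longleftrightarrow>
              pathType k V E \<and> simplicial k V E C))"
proof -
  note k1 = assms(1) and T = assms(2) and KC = assms(3)
  have r: "rkt k C V E" using reroot[OF T KC] .
  have rc: "finite C" "card C = k" "C \<subseteq> V" using rkt_C[OF r] by auto
  have fV: "finite V" using kTree_basic[OF T] by simp
  define F where "F = Fam k V E C"
  define N where "N = card F"
  define s where "s = (\<Sum>A\<in>F. real (card (A - C)))"
  have fF: "finite F" unfolding F_def using Fam_fin[OF fV] .
  have NC: "Ncount k V E C = N" unfolding N_def F_def using Ncount_Fam[OF T] .
  have up: "card V - k + 1 \<le> N" "2 * SS k V E C \<le> N * (N - 1)"
     "2 * SS k V E C = N * (N - 1) \<longleftrightarrow> N = card V - k + 1"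
    using upper_rkt[OF r] unfolding N_def F_def by auto
  have N1: "1 \<le> N" using up(1) by simp
  have Npos: "real N > 0" using N1 by simp
  have Asub: "\<And>A. A \<in> F \<Longrightarrow> C \<subseteq> A \<and> A \<subseteq> V \<and> finite A" unfolding F_def
    using Fam_sub fV finite_subset by metis
  have cardA: "\<And>A. A \<in> F \<Longrightarrow> card A = card (A - C) + k"
  proof -
    fix A assume A: "A \<in> F"
    then have "C \<subseteq> A" "finite A" using Asub by auto
    then show "card A = card (A - C) + k" using card_Diff_subset[OF rc(1)] card_mono rc(2) by fastforce
  qed
  have sumA: "(\<Sum>A\<in>F. real (card A)) = s + real N * real k"
  proof -
    have "(\<Sum>A\<in>F. real (card A)) = (\<Sum>A\<in>F. real (card (A - C)) + real k)"
      using cardA by (intro sum.cong) auto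
    also have "\<dots> = s + real N * real k" unfolding s_def N_def by (simp add: sum.distrib)
    finally show ?thesis .
  qed
  have SSs: "real (SS k V E C) = s"
  proof -
    have "real (SS k V E C) = (\<Sum>A\<in>F. real (card A - k))" unfolding SS_def F_def by simp
    also have "\<dots> = s" unfolding s_def using cardA by (intro sum.cong) auto
    finally show ?thesis .
  qed
  have mu: "mu k V E C = real k + s / real N"
    unfolding mu_def NC using sum_Fam[OF T, of C] sumA Npos unfolding F_def[symmetric]
    by (simp add: field_simps)
  have CF: "C \<in> F"
  proof -
    have "E \<inter> cmp C = cmp C" using isClique_cmp[of E C] KC unfolding kClique_def by auto
    then show ?thesis unfolding F_def Fam_def using kTree.base[OF rc(1) rc(2)] rc by simp
  qed
  have VF: "V \<in> F" unfolding F_def using V_in_Fam[OF T rc(3)] .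
  have clF: "\<forall>X\<in>F. \<forall>Y\<in>F. X \<union> Y \<in> F \<and> X \<inter> Y \<in> F" unfolding F_def using Fam_closed[OF r] by blast
  have FL: "real N * log 2 (real N) \<le> 2 * s \<and> (real N * log 2 (real N) = 2 * s \<longrightarrow> isBool C F)"
    using fam_lower[OF fF _ CF clF] Asub unfolding N_def s_def by blast
  have FLc: "isBool C F \<Longrightarrow> real N * log 2 (real N) = 2 * s"
    unfolding isBool_def N_def s_def using bool_eq[OF fF] by blast
  have lowiff: "\<And>x. real k + x / 2 \<le> real k + s / real N \<longleftrightarrow> real N * x \<le> 2 * s"
    using Npos by (simp add: field_simps)
  have loweq: "\<And>x. real k + x / 2 = real k + s / real N \<longleftrightarrow> real N * x = 2 * s"
    using Npos by (simp add: field_simps)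
  have L1: "real k + log 2 (real (Ncount k V E C)) / 2 \<le> mu k V E C"
    unfolding mu NC lowiff using FL by simp
  have starB: "isBool C F \<longleftrightarrow> kStarBase k V E C"
  proof -
    have AS: "\<forall>A\<in>F. C \<subseteq> A \<and> A \<subseteq> V" using Asub by simp
    have "isBool C F \<longleftrightarrow> F = (\<lambda>X. C \<union> X) ` Pow (V - C)" using isBool_iff[OF AS VF] .
    also have "\<dots> \<longleftrightarrow> starProp V E C" unfolding F_def using star_rkt[OF r] .
    also have "\<dots> \<longleftrightarrow> kStarBase k V E C" unfolding kStarBase_def starProp_def using T KC by simp
    finally show ?thesis .
  qed
  have L3: "real k + log 2 (real (Ncount k V E C)) / 2 = mu k V E C \<longleftrightarrow> kStarBase k V E C"
    unfolding mu NC loweq using FL FLc starB by blast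
  have rN: "real (N * (N - 1)) = real N * (real N - 1)" using N1 by (simp add: of_nat_diff)
  have upiff: "real k + s / real N \<le> (real N + 2 * real k - 1) / 2 \<longleftrightarrow> 2 * s \<le> real N * (real N - 1)"
    using Npos by (simp add: field_simps)
  have upeq: "real k + s / real N = (real N + 2 * real k - 1) / 2 \<longleftrightarrow> 2 * s = real N * (real N - 1)"
    using Npos by (simp add: field_simps)
  have up2: "2 * s \<le> real N * (real N - 1)"
  proof -
    have "real (2 * SS k V E C) \<le> real (N * (N - 1))" using up(2) by (simp only: of_nat_le_iff)
    then show ?thesis unfolding rN using SSs by simp
  qed
  have up3: "2 * s = real N * (real N - 1) \<longleftrightarrow> N = card V - k + 1"
  proof -
    have "2 * s = real N * (real N - 1) \<longleftrightarrow> real (2 * SS k V E C) = real (N * (N - 1))"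
      unfolding rN using SSs by simp
    also have "\<dots> \<longleftrightarrow> 2 * SS k V E C = N * (N - 1)" by (simp only: of_nat_eq_iff)
    finally show ?thesis using up(3) by simp
  qed
  have L2: "mu k V E C \<le> (real (Ncount k V E C) + 2 * real k - 1) / 2"
    unfolding mu NC upiff using up2 .
  have L4: "card V \<ge> k + 1 \<longrightarrow>
           (mu k V E C = (real (Ncount k V E C) + 2 * real k - 1) / 2 \<longleftrightarrow>
              pathType k V E \<and> simplicial k V E C)"
  proof
    assume cV: "card V \<ge> k + 1"
    have "mu k V E C = (real (Ncount k V E C) + 2 * real k - 1) / 2 \<longleftrightarrow> N = card V - k + 1"
      unfolding mu NC upeq up3 ..
    also have "\<dots> \<longleftrightarrow> (card V = k + 1 \<or> card {x. kLeaf k V E x} = 2) \<and> (\<exists>x\<in>C. kLeaf k V E x)"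
      unfolding N_def F_def using chain_rkt[OF r k1] cV by simp
    also have "\<dots> \<longleftrightarrow> pathType k V E \<and> simplicial k V E C"
      unfolding pathType_def simplicial_def using T KC cV by auto
    finally show "mu k V E C = (real (Ncount k V E C) + 2 * real k - 1) / 2 \<longleftrightarrow>
              pathType k V E \<and> simplicial k V E C" .
  qed
  show ?thesis using L1 L2 L3 L4 by blast
qed

end
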